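(* Let $f:\Sigma\to\mathbb{S}^4_1$ be a non-isotropic conformal marginally trapped immersion with flat normal bundle, and, on a simply connected coordinate domain, let $z$, $c$, $\xi$, $h$, $u$ and the matrices $A^t$ be as in the context. Then for every $t\in\mathbb R$ the one-form $\alpha_t=A^t\,dz+\overline{A^t}\,d\bar z$ is $\mathfrak{so}(4,1)$-valued, coincides for $t=0$ with the Maurer–Cartan form $F^{-1}dF$ of the adapted frame $F$, and satisfies the Maurer–Cartan equation $d\alpha_t+\frac12[\alpha_t\wedge\alpha_t]=0$.
   Context: $\mathbb{R}^5_1$ is $\mathbb{R}^5$ with $\langle x,y\rangle=x_0y_0+x_1y_1+x_2y_2+x_3y_3-x_4y_4$ (complex-bilinearly extended), standard basis $e_0,\dots,e_4$, $\mathbb{S}^4_1=\{\langle x,x\rangle=1\}$; future pointing: $\langle X,e_4\rangle<0$. $f$ conformal spacelike immersion, $\langle f_z,f_{\bar z}\rangle=e^{2u}$; positively oriented orthonormal normal frame $\{N_1,N_2\}$ ($\langle N_1,N_1\rangle=1,\langle N_2,N_2\rangle=-1,\langle N_1,N_2\rangle=0$, $N_2$ future pointing, orientation of $\nu(f)$); $\xi_1=\langle f_{zz},N_1\rangle$, $\xi_2=-\langle f_{zz},N_2\rangle$; $\mathbf H$: $f_{z\bar z}=-e^{2u}f+e^{2u}\mathbf H$; marginally trapped: $\langle\mathbf H,\mathbf H\rangle=0$, $\mathbf H=h(N_1+N_2)$; non-isotropic: $\xi_1^2-\xi_2^2\ne0$. Setup: since the normal bundle is flat, choose $\{N_1,N_2\}$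 $\nabla^\perp$-parallel (i.e. $\langle\partial_zN_1,N_2\rangle=0$) and a coordinate $z$ with $q=(\xi_1-\xi_2)dz^2=c\,dz^2$, $c\in\mathbb R\setminus\{0\}$; write $\xi_2=\xi$, $\xi_1=\xi+c$. Let $F=(f,F_1,F_2,N_1,N_2)\in SO_+(4,1)$ (columns) with $f_z=\frac{e^u}{\sqrt2}(F_1-iF_2)$. For $t\in\mathbb R$ put $h^t=h+\frac{t}{2c}$, $a^t_1=\frac{e^{-u}(\xi+c)+e^uh^t}{\sqrt2}$, $b^t_1=\frac{e^{-u}(\xi+c)-e^uh^t}{\sqrt2}$, $a^t_2=\frac{e^{-u}\xi+e^uh^t}{\sqrt2}$, $b^t_2=\frac{e^{-u}\xi-e^uh^t}{\sqrt2}$, and let $A^t$ be the $5\times5$ matrix with rows $(0,\,-\tfrac{e^u}{\sqrt2},\,i\tfrac{e^u}{\sqrt2},\,0,\,0)$, $(\tfrac{e^u}{\sqrt2},\,0,\,iu_z,\,-a^t_1,\,a^t_2)$, $(-i\tfrac{e^u}{\sqrt2},\,-iu_z,\,0,\,-ib^t_1,\,ib^t_2)$, $(0,\,a^t_1,\,ib^t_1,\,0,\,0)$, $(0,\,a^t_2,\,ib^t_2,\,0,\,0)$. Then $A^0=F^{-1}F_z$. *)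

theory Defs
  imports "HOL-Analysis.Analysis"
begin

definition idx5 :: "5 \<Rightarrow> nat" where
  "idx5 i = (if i = 0 then 0 else if i = 1 then 1 else if i = 2 then 2 else if i = 3 then 3 else 4)"

definition sgnL :: "5 \<Rightarrow> real" where
  "sgnL i = (if i = 4 then -1 else 1)"

definition lor :: "complex^5 \<Rightarrow> complex^5 \<Rightarrow> complex" where
  "lor x y = (\<Sum>i\<in>UNIV. complex_of_real (sgnL i) * x$i * y$i)"

definition etaR :: "real^5^5" where
  "etaR = (\<chi> i j. if i = j then sgnL i else 0)"

definition SOp41 :: "real^5^5 \<Rightarrow> bool" where
  "SOp41 M \<longleftrightarrow> transpose M ** etaR ** M = etaR \<and> det M = 1 \<and> M$4$4 > 0"

definition so41 :: "real^5^5 \<Rightarrow> bool" where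
  "so41 X \<longleftrightarrow> transpose X ** etaR + etaR ** X = 0"

definition pdx :: "(complex \<Rightarrow> 'a::real_normed_vector) \<Rightarrow> complex \<Rightarrow> 'a" where
  "pdx g p = frechet_derivative g (at p) 1"

definition pdy :: "(complex \<Rightarrow> 'a::real_normed_vector) \<Rightarrow> complex \<Rightarrow> 'a" where
  "pdy g p = frechet_derivative g (at p) \<i>"

fun Ck_on :: "nat \<Rightarrow> complex set \<Rightarrow> (complex \<Rightarrow> 'a::real_normed_vector) \<Rightarrow> bool" where
  "Ck_on 0 U g = continuous_on U g"
| "Ck_on (Suc k) U g = (g differentiable_on U \<and> Ck_on k U (pdx g) \<and> Ck_on k U (pdy g))"

definition Cinf_on :: "complex set \<Rightarrow> (complex \<Rightarrow> 'a::real_normed_vector) \<Rightarrow> bool" where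
  "Cinf_on U g \<longleftrightarrow> (\<forall>k. Ck_on k U g)"

definition Dz :: "(complex \<Rightarrow> complex) \<Rightarrow> complex \<Rightarrow> complex" where
  "Dz g p = (pdx g p - \<i> * pdy g p) / 2"

definition Dzb :: "(complex \<Rightarrow> complex) \<Rightarrow> complex \<Rightarrow> complex" where
  "Dzb g p = (pdx g p + \<i> * pdy g p) / 2"

definition DzV :: "(complex \<Rightarrow> complex^5) \<Rightarrow> complex \<Rightarrow> complex^5" where
  "DzV g p = (\<chi> i. Dz (\<lambda>q. g q $ i) p)"

definition DzbV :: "(complex \<Rightarrow> complex^5) \<Rightarrow> complex \<Rightarrow> complex^5" where
  "DzbV g p = (\<chi> i. Dzb (\<lambda>q. g q $ i) p)"

definition cvf :: "(complex \<Rightarrow> real^5) \<Rightarrow> complex \<Rightarrow> complex^5" where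
  "cvf g p = (\<chi> i. complex_of_real (g p $ i))"

definition frameF :: "(complex \<Rightarrow> real^5) \<Rightarrow> (complex \<Rightarrow> real^5) \<Rightarrow> (complex \<Rightarrow> real^5) \<Rightarrow>
    (complex \<Rightarrow> real^5) \<Rightarrow> (complex \<Rightarrow> real^5) \<Rightarrow> complex \<Rightarrow> real^5^5" where
  "frameF f F1 F2 N1 N2 p = (\<chi> i j. (if j = 0 then f p else if j = 1 then F1 p else if j = 2 then F2 p
      else if j = 3 then N1 p else N2 p) $ i)"

definition Amat :: "real \<Rightarrow> (complex \<Rightarrow> complex) \<Rightarrow> (complex \<Rightarrow> real) \<Rightarrow> (complex \<Rightarrow> real)
    \<Rightarrow> real \<Rightarrow> complex \<Rightarrow> complex^5^5" where
  "Amat c \<xi> h u t p =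
    (let e = complex_of_real (exp (u p));
         ei = complex_of_real (exp (- u p));
         s = complex_of_real (sqrt 2);
         ht = complex_of_real (h p + t / (2 * c));
         uz = Dz (\<lambda>q. complex_of_real (u q)) p;
         a1 = (ei * (\<xi> p + complex_of_real c) + e * ht) / s;
         b1 = (ei * (\<xi> p + complex_of_real c) - e * ht) / s;
         a2 = (ei * \<xi> p + e * ht) / s;
         b2 = (ei * \<xi> p - e * ht) / s;
         ent = (\<lambda>r k::nat.
           [[0, - e / s, \<i> * e / s, 0, 0],
            [e / s, 0, \<i> * uz, - a1, a2],
            [- \<i> * e / s, - \<i> * uz, 0, - \<i> * b1, \<i> * b2],
            [0, a1, \<i> * b1, 0, 0],
            [0, a2, \<i> * b2, 0, 0]] ! r ! k)
     in (\<chi> i j. ent (idx5 i) (idx5 j)))"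

text \<open>Value of the real one-form alpha = A dz + conj(A) dzbar on the tangent vector v
  (identified with a complex number v = a + i b, i.e. a d/dx + b d/dy).\<close>
definition alpha :: "complex^5^5 \<Rightarrow> complex \<Rightarrow> real^5^5" where
  "alpha A v = (\<chi> i j. Re (A$i$j * v + cnj (A$i$j * v)))"

end

theory Submission
  imports Defs
begin

definition dd :: "(complex \<Rightarrow> 'a::real_normed_vector) \<Rightarrow> complex \<Rightarrow> 'a \<Rightarrow> 'a \<Rightarrow> bool" where
  "dd g p a b \<longleftrightarrow> (g has_derivative (\<lambda>v. Re v *\<^sub>R a + Im v *\<^sub>R b)) (at p)"

lemma bl_ReIm: "bounded_linear (\<lambda>v::complex. Re v *\<^sub>R a + Im v *\<^sub>R b)"
  by (intro bounded_linear_intros bounded_linear_Re bounded_linear_Im)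

lemma dd_pd: assumes "dd g p a b" shows "pdx g p = a" "pdy g p = b"
proof -
  have D: "frechet_derivative g (at p) = (\<lambda>v. Re v *\<^sub>R a + Im v *\<^sub>R b)"
    using assms frechet_derivative_at unfolding dd_def by metis
  show "pdx g p = a" "pdy g p = b" unfolding pdx_def pdy_def D by simp_all
qed

lemma diff_hd: assumes "g differentiable (at p)" shows "dd g p (pdx g p) (pdy g p)"
proof -
  let ?D = "frechet_derivative g (at p)"
  have D: "(g has_derivative ?D) (at p)" using assms frechet_derivative_works by blast
  then have lin: "linear ?D" using has_derivative_linear by blast
  have "?D v = Re v *\<^sub>R ?D 1 + Im v *\<^sub>R ?D \<i>" for v
  proof -
    have "v = Re v *\<^sub>R 1 + Im v *\<^sub>R \<i>"
      by (simp add: complex_eq_iff)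
    then have "?D v = ?D (Re v *\<^sub>R 1 + Im v *\<^sub>R \<i>)" by simp
    also have "\<dots> = Re v *\<^sub>R ?D 1 + Im v *\<^sub>R ?D \<i>"
      using lin by (simp add: linear_add linear_scale)
    finally show ?thesis .
  qed
  then have "?D = (\<lambda>v. Re v *\<^sub>R pdx g p + Im v *\<^sub>R pdy g p)"
    unfolding pdx_def pdy_def by (intro ext) (rule \<open>\<And>v. ?D v = _\<close>)
  with D show ?thesis unfolding dd_def by simp
qed

lemma dd_diff: "dd g p a b \<Longrightarrow> g differentiable (at p)"
  unfolding dd_def differentiable_def by blast

lemma dd_transfer: "dd g p a b \<Longrightarrow> open U \<Longrightarrow> p \<in> U \<Longrightarrow> (\<And>q. q \<in> U \<Longrightarrow> g q = k q) \<Longrightarrow> dd k p a b"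
  unfolding dd_def by (rule has_derivative_transform_within_open)

lemma dd_const: "dd (\<lambda>q. c) p 0 0"
  unfolding dd_def by (simp add: has_derivative_const)

lemma dd_linear: assumes "bounded_linear L" "dd g p a b" shows "dd (\<lambda>q. L (g q)) p (L a) (L b)"
proof -
  have "((\<lambda>q. L (g q)) has_derivative (\<lambda>v. L (Re v *\<^sub>R a + Im v *\<^sub>R b))) (at p)"
    using bounded_linear.has_derivative[OF assms(1)] assms(2) unfolding dd_def by blast
  moreover have "(\<lambda>v. L (Re v *\<^sub>R a + Im v *\<^sub>R b)) = (\<lambda>v. Re v *\<^sub>R L a + Im v *\<^sub>R L b)"
    using bounded_linear.linear[OF assms(1)] by (simp add: linear_add linear_scale)
  ultimately show ?thesis unfolding dd_def by simp
qed

lemma dd_bilinear: fixes prod :: "'a::real_normed_vector \<Rightarrow> 'b::real_normed_vector \<Rightarrow> 'c::real_normed_vector"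
  assumes "bounded_bilinear prod" "dd g p ag bg" "dd k p ak bk"
  shows "dd (\<lambda>q. prod (g q) (k q)) p (prod (g p) ak + prod ag (k p)) (prod (g p) bk + prod bg (k p))"
proof -
  have "((\<lambda>q. prod (g q) (k q)) has_derivative
     (\<lambda>v. prod (g p) (Re v *\<^sub>R ak + Im v *\<^sub>R bk) + prod (Re v *\<^sub>R ag + Im v *\<^sub>R bg) (k p))) (at p)"
    using bounded_bilinear.FDERIV[OF assms(1)] assms(2,3) unfolding dd_def by blast
  moreover have "(\<lambda>v. prod (g p) (Re v *\<^sub>R ak + Im v *\<^sub>R bk) + prod (Re v *\<^sub>R ag + Im v *\<^sub>R bg) (k p))
     = (\<lambda>v. Re v *\<^sub>R (prod (g p) ak + prod ag (k p)) + Im v *\<^sub>R (prod (g p) bk + prod bg (k p)))"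
    apply (rule ext)
    apply (simp add: bounded_bilinear.add_left[OF assms(1)] bounded_bilinear.add_right[OF assms(1)]
        bounded_bilinear.scaleR_left[OF assms(1)] bounded_bilinear.scaleR_right[OF assms(1)] scaleR_add_right)
    done
  ultimately show ?thesis unfolding dd_def by simp
qed

lemma dd_add: "dd g p a b \<Longrightarrow> dd k p c d \<Longrightarrow> dd (\<lambda>q. g q + k q) p (a + c) (b + d)"
  unfolding dd_def by (drule (1) has_derivative_add) (simp add: algebra_simps)

lemma dd_minus: "dd g p a b \<Longrightarrow> dd (\<lambda>q. - g q) p (- a) (- b)"
  unfolding dd_def by (drule has_derivative_minus) (simp add: algebra_simps)

lemma dd_sub: "dd g p a b \<Longrightarrow> dd k p c d \<Longrightarrow> dd (\<lambda>q. g q - k q) p (a - c) (b - d)"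
  unfolding dd_def by (drule (1) has_derivative_diff) (simp add: algebra_simps)

lemma dd_sum: "finite S \<Longrightarrow> (\<And>i. i \<in> S \<Longrightarrow> dd (g i) p (a i) (b i)) \<Longrightarrow>
   dd (\<lambda>q. \<Sum>i\<in>S. g i q) p (\<Sum>i\<in>S. a i) (\<Sum>i\<in>S. b i)"
  unfolding dd_def by (drule has_derivative_sum) (simp add: scaleR_sum_right sum.distrib)

lemma dd_mult: "dd g p a b \<Longrightarrow> dd k p c d \<Longrightarrow>
   dd (\<lambda>q. g q * k q) p (g p * c + a * k p) (g p * d + b * k p)"
  for g k :: "complex \<Rightarrow> 'a::real_normed_algebra"
  by (rule dd_bilinear[OF bounded_bilinear_mult])

lemma dd_scaleR: "dd g p a b \<Longrightarrow> dd k p c d \<Longrightarrow>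
   dd (\<lambda>q. g q *\<^sub>R k q) p (g p *\<^sub>R c + a *\<^sub>R k p) (g p *\<^sub>R d + b *\<^sub>R k p)"
  by (rule dd_bilinear[OF bounded_bilinear_scaleR])

lemma dd_nth: "dd g p a b \<Longrightarrow> dd (\<lambda>q. g q $ i) p (a $ i) (b $ i)"
  by (rule dd_linear[OF bounded_linear_vec_nth])

lemma dd_of_real: "dd g p a b \<Longrightarrow> dd (\<lambda>q. of_real (g q) :: complex) p (of_real a) (of_real b)"
  by (rule dd_linear[OF bounded_linear_of_real])

lemma dd_exp: assumes "dd g p a b" shows "dd (\<lambda>q. exp (g q :: real)) p (exp (g p) * a) (exp (g p) * b)"
proof -
  have e: "(exp has_derivative (*) (exp (g p))) (at (g p))"
    using DERIV_exp[of "g p"] unfolding has_field_derivative_def .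
  have "((\<lambda>q. exp (g q)) has_derivative (\<lambda>v. exp (g p) * (Re v *\<^sub>R a + Im v *\<^sub>R b))) (at p)"
    by (rule has_derivative_compose[OF assms[unfolded dd_def] e])
  moreover have "(\<lambda>v. exp (g p) * (Re v *\<^sub>R a + Im v *\<^sub>R b)) = (\<lambda>v. Re v *\<^sub>R (exp (g p) * a) + Im v *\<^sub>R (exp (g p) * b))"
    by (rule ext) (simp add: algebra_simps)
  ultimately show ?thesis unfolding dd_def by simp
qed
lemma dd_vec: fixes g :: "complex \<Rightarrow> 'a::euclidean_space ^ 'n"
  assumes "\<And>i. dd (\<lambda>q. g q $ i) p (a $ i) (b $ i)" shows "dd g p a b"
proof -
  have "((\<lambda>x. g x \<bullet> j) has_derivative (\<lambda>v. (Re v *\<^sub>R a + Im v *\<^sub>R b) \<bullet> j)) (at p)" if "j \<in> Basis" for j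
  proof -
    obtain i u where j: "j = axis i u" "u \<in> Basis" using \<open>j \<in> Basis\<close> unfolding Basis_vec_def by blast
    have "((\<lambda>x. g x $ i \<bullet> u) has_derivative (\<lambda>v. (Re v *\<^sub>R a $ i + Im v *\<^sub>R b $ i) \<bullet> u)) (at p)"
      using bounded_linear.has_derivative[OF bounded_linear_inner_left assms[unfolded dd_def]] .
    then show ?thesis unfolding j inner_axis by simp
  qed
  then show ?thesis unfolding dd_def has_derivative_componentwise_within[of g _ p UNIV] by blast
qed

lemma line_x: fixes \<phi> :: "complex \<Rightarrow> real"
  assumes "dd \<phi> (z + of_real s) A B"
  shows "((\<lambda>s. \<phi> (z + of_real s)) has_derivative (\<lambda>t. t * A)) (at s within S)"
proof -
  have i: "((\<lambda>s::real. z + of_real s) has_derivative (\<lambda>t. of_real t)) (at s within S)"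
    by (auto intro!: derivative_eq_intros bounded_linear.has_derivative[OF bounded_linear_of_real])
  show ?thesis using has_derivative_compose[OF i assms[unfolded dd_def]] by simp
qed

lemma line_y: fixes \<phi> :: "complex \<Rightarrow> real"
  assumes "dd \<phi> (z + \<i> * of_real s) A B"
  shows "((\<lambda>s. \<phi> (z + \<i> * of_real s)) has_derivative (\<lambda>t. t * B)) (at s within S)"
proof -
  have i: "((\<lambda>s::real. z + \<i> * of_real s) has_derivative (\<lambda>t. \<i> * of_real t)) (at s within S)"
    by (auto intro!: derivative_eq_intros bounded_linear.has_derivative[OF bounded_linear_of_real])
  show ?thesis using has_derivative_compose[OF i assms[unfolded dd_def]] by simp
qed

lemma cmod_bound: "cmod (of_real a + \<i> * of_real b) \<le> \<bar>a\<bar> + \<bar>b\<bar>"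
  by (metis norm_triangle_ineq norm_ii norm_mult norm_of_real mult_1)

lemma schwarz:
  fixes \<phi> \<phi>x \<phi>y :: "complex \<Rightarrow> real"
  assumes U: "open U" "p \<in> U"
    and d: "\<And>q. q \<in> U \<Longrightarrow> dd \<phi> q (\<phi>x q) (\<phi>y q)"
    and dx: "dd \<phi>x p a1 b1" and dy: "dd \<phi>y p a2 b2"
  shows "b1 = a2"
proof (rule ccontr)
  assume ne: "b1 \<noteq> a2"
  define e where "e = \<bar>b1 - a2\<bar> / 8"
  have e: "e > 0" using ne by (simp add: e_def)
  obtain d1 where d1: "d1 > 0" "\<And>y. norm (y - p) < d1 \<Longrightarrow>
      norm (\<phi>x y - \<phi>x p - (Re (y-p) *\<^sub>R a1 + Im (y-p) *\<^sub>R b1)) \<le> e * norm (y - p)"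
    using dx e unfolding dd_def has_derivative_at_alt by meson
  obtain d2 where d2: "d2 > 0" "\<And>y. norm (y - p) < d2 \<Longrightarrow>
      norm (\<phi>y y - \<phi>y p - (Re (y-p) *\<^sub>R a2 + Im (y-p) *\<^sub>R b2)) \<le> e * norm (y - p)"
    using dy e unfolding dd_def has_derivative_at_alt by meson
  obtain r where r: "r > 0" "ball p r \<subseteq> U" using U open_contains_ball by blast
  define h where "h = min (min d1 d2) r / 4"
  have h: "h > 0" "2 * h < d1" "2 * h < d2" "2 * h < r" using d1 d2 r by (auto simp: h_def)
  have inU: "p + of_real s + \<i> * of_real t \<in> U" if "\<bar>s\<bar> \<le> h" "\<bar>t\<bar> \<le> h" for s t
  proof -
    have "cmod (of_real s + \<i> * of_real t) < r" using cmod_bound[of s t] that h by linarith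
    then have "cmod (- (of_real s + \<i> * of_real t)) < r" by (simp only: norm_minus_cancel)
    then have "p + (of_real s + \<i> * of_real t) \<in> ball p r" by (simp add: dist_norm)
    then show ?thesis using r(2) by (auto simp: add.assoc)
  qed
  define g1 where "g1 s = \<phi> (p + \<i> * of_real h + of_real s) - \<phi> (p + of_real s)" for s
  have g1d: "(g1 has_derivative (\<lambda>t. t * (\<phi>x (p + \<i> * of_real h + of_real s) - \<phi>x (p + of_real s)))) (at s within {0..h})"
    if "0 \<le> s" "s \<le> h" for s
  proof -
    have a: "p + \<i> * of_real h + of_real s \<in> U" using inU[of s h] that h by (simp add: algebra_simps)
    have b: "p + of_real s \<in> U" using inU[of s 0] that h by simp
    show ?thesis unfolding g1_def
      using has_derivative_diff[OF line_x[OF d[OF a]] line_x[OF d[OF b]]]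
      by (simp add: algebra_simps)
  qed
  obtain \<theta> where th: "\<theta> \<in> {0<..<h}" "g1 h - g1 0 = h * (\<phi>x (p + \<i> * of_real h + of_real \<theta>) - \<phi>x (p + of_real \<theta>))"
    using mvt_simple[OF h(1) g1d] by auto
  have B1: "\<bar>(\<phi>x (p + \<i> * of_real h + of_real \<theta>) - \<phi>x (p + of_real \<theta>)) - h * b1\<bar> \<le> 3 * e * h"
  proof -
    have n1: "norm ((p + \<i> * of_real h + of_real \<theta>) - p) \<le> 2 * h"
      using cmod_bound[of \<theta> h] th h by (simp add: add.commute)
    have n2: "norm ((p + of_real \<theta>) - p) \<le> h" using th by simp
    have A0: "norm (\<phi>x (p + \<i> * of_real h + of_real \<theta>) - \<phi>x p - (Re ((p + \<i> * of_real h + of_real \<theta>) - p) *\<^sub>R a1 + Im ((p + \<i> * of_real h + of_real \<theta>) - p) *\<^sub>R b1)) \<le> e * norm ((p + \<i> * of_real h + of_real \<theta>) - p)"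
      by (rule d1(2)) (use n1 h in linarith)
    have A: "\<bar>\<phi>x (p + \<i> * of_real h + of_real \<theta>) - \<phi>x p - (\<theta> * a1 + h * b1)\<bar> \<le> e * (2 * h)"
      using order_trans[OF A0 mult_left_mono[OF n1, of e]] e by simp
    have B0: "norm (\<phi>x (p + of_real \<theta>) - \<phi>x p - (Re ((p + of_real \<theta>) - p) *\<^sub>R a1 + Im ((p + of_real \<theta>) - p) *\<^sub>R b1)) \<le> e * norm ((p + of_real \<theta>) - p)"
      by (rule d1(2)) (use n2 h in linarith)
    have B: "\<bar>\<phi>x (p + of_real \<theta>) - \<phi>x p - \<theta> * a1\<bar> \<le> e * h"
      using order_trans[OF B0 mult_left_mono[OF n2, of e]] e by simp
    show ?thesis using A B by linarith
  qed
  define g2 where "g2 s = \<phi> (p + of_real h + \<i> * of_real s) - \<phi> (p + \<i> * of_real s)" for s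
  have g2d: "(g2 has_derivative (\<lambda>t. t * (\<phi>y (p + of_real h + \<i> * of_real s) - \<phi>y (p + \<i> * of_real s)))) (at s within {0..h})"
    if "0 \<le> s" "s \<le> h" for s
  proof -
    have a: "p + of_real h + \<i> * of_real s \<in> U" using inU[of h s] that h by (simp add: algebra_simps)
    have b: "p + \<i> * of_real s \<in> U" using inU[of 0 s] that h by simp
    show ?thesis unfolding g2_def
      using has_derivative_diff[OF line_y[OF d[OF a]] line_y[OF d[OF b]]]
      by (simp add: algebra_simps)
  qed
  obtain \<eta> where et: "\<eta> \<in> {0<..<h}" "g2 h - g2 0 = h * (\<phi>y (p + of_real h + \<i> * of_real \<eta>) - \<phi>y (p + \<i> * of_real \<eta>))"
    using mvt_simple[OF h(1) g2d] by auto
  have B2: "\<bar>(\<phi>y (p + of_real h + \<i> * of_real \<eta>) - \<phi>y (p + \<i> * of_real \<eta>)) - h * a2\<bar> \<le> 3 * e * h"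
  proof -
    have n1: "norm ((p + of_real h + \<i> * of_real \<eta>) - p) \<le> 2 * h"
      using cmod_bound[of h \<eta>] et h by (simp add: add.assoc)
    have n2: "norm ((p + \<i> * of_real \<eta>) - p) \<le> h" using et by (simp add: norm_mult)
    have A0: "norm (\<phi>y (p + of_real h + \<i> * of_real \<eta>) - \<phi>y p - (Re ((p + of_real h + \<i> * of_real \<eta>) - p) *\<^sub>R a2 + Im ((p + of_real h + \<i> * of_real \<eta>) - p) *\<^sub>R b2)) \<le> e * norm ((p + of_real h + \<i> * of_real \<eta>) - p)"
      by (rule d2(2)) (use n1 h in linarith)
    have A: "\<bar>\<phi>y (p + of_real h + \<i> * of_real \<eta>) - \<phi>y p - (h * a2 + \<eta> * b2)\<bar> \<le> e * (2 * h)"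
      using order_trans[OF A0 mult_left_mono[OF n1, of e]] e by simp
    have B0: "norm (\<phi>y (p + \<i> * of_real \<eta>) - \<phi>y p - (Re ((p + \<i> * of_real \<eta>) - p) *\<^sub>R a2 + Im ((p + \<i> * of_real \<eta>) - p) *\<^sub>R b2)) \<le> e * norm ((p + \<i> * of_real \<eta>) - p)"
      by (rule d2(2)) (use n2 h in linarith)
    have B: "\<bar>\<phi>y (p + \<i> * of_real \<eta>) - \<phi>y p - \<eta> * b2\<bar> \<le> e * h"
      using order_trans[OF B0 mult_left_mono[OF n2, of e]] e by simp
    show ?thesis using A B by linarith
  qed
  have eq: "g1 h - g1 0 = g2 h - g2 0" unfolding g1_def g2_def by (simp add: algebra_simps)
  have X: "\<phi>x (p + \<i> * of_real h + of_real \<theta>) - \<phi>x (p + of_real \<theta>)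
         = \<phi>y (p + of_real h + \<i> * of_real \<eta>) - \<phi>y (p + \<i> * of_real \<eta>)"
    using eq th(2) et(2) h(1) by simp
  have "\<bar>h * b1 - h * a2\<bar> \<le> 6 * e * h" using B1 B2 X by linarith
  moreover have "\<bar>h * b1 - h * a2\<bar> = h * \<bar>b1 - a2\<bar>"
    using h(1) by (simp add: right_diff_distrib[symmetric] abs_mult)
  ultimately have "h * \<bar>b1 - a2\<bar> \<le> h * (6 * e)" by (simp add: algebra_simps)
  then have "\<bar>b1 - a2\<bar> \<le> 6 * e" using h(1) by (simp add: mult_le_cancel_left_pos)
  then show False using e unfolding e_def by simp
qed



lemma exhaust_5:
  fixes x :: 5
  shows "x = 0 \<or> x = 1 \<or> x = 2 \<or> x = 3 \<or> x = 4"
proof (induct x)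
  case (of_int z)
  then have "z = 0 \<or> z = 1 \<or> z = 2 \<or> z = 3 \<or> z = 4" by simp arith
  then show ?case by auto
qed
lemma forall_5: "(\<forall>i::5. P i) \<longleftrightarrow> P 0 \<and> P 1 \<and> P 2 \<and> P 3 \<and> P 4"
  by (metis exhaust_5)
lemma neq5[simp]: "(0::5) \<noteq> 1" "(0::5) \<noteq> 2" "(0::5) \<noteq> 3" "(0::5) \<noteq> 4" "(1::5) \<noteq> 2" "(1::5) \<noteq> 3" "(1::5) \<noteq> 4"
 "(2::5) \<noteq> 3" "(2::5) \<noteq> 4" "(3::5) \<noteq> 4"
 "(1::5) \<noteq> 0" "(2::5) \<noteq> 0" "(3::5) \<noteq> 0" "(4::5) \<noteq> 0" "(2::5) \<noteq> 1" "(3::5) \<noteq> 1" "(4::5) \<noteq> 1"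
 "(3::5) \<noteq> 2" "(4::5) \<noteq> 2" "(4::5) \<noteq> 3"
  by simp_all
lemma UNIV_5: "UNIV = {0, 1, 2, 3, 4::5}"
  using exhaust_5 by blast
lemma sum_5: "(\<Sum>i\<in>(UNIV::5 set). f i) = f 0 + f 1 + f 2 + f 3 + f 4"
  unfolding UNIV_5 by (simp add: add.assoc)
lemma idx5_simps[simp]: "idx5 0 = 0" "idx5 1 = 1" "idx5 2 = 2" "idx5 3 = 3" "idx5 4 = 4"
  by (simp_all add: idx5_def)
lemma sgnL_simps[simp]: "sgnL 0 = 1" "sgnL 1 = 1" "sgnL 2 = 1" "sgnL 3 = 1" "sgnL 4 = -1"
  by (simp_all add: sgnL_def)

definition AM :: "real \<Rightarrow> complex \<Rightarrow> complex \<Rightarrow> complex \<Rightarrow> complex \<Rightarrow> complex \<Rightarrow> complex^5^5" where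
  "AM E Z a1 b1 a2 b2 = (let e = complex_of_real E; s = complex_of_real (sqrt 2);
     ent = (\<lambda>r k::nat. [[0, - e / s, \<i> * e / s, 0, 0],
            [e / s, 0, \<i> * Z, - a1, a2],
            [- \<i> * e / s, - \<i> * Z, 0, - \<i> * b1, \<i> * b2],
            [0, a1, \<i> * b1, 0, 0],
            [0, a2, \<i> * b2, 0, 0]] ! r ! k) in (\<chi> i j. ent (idx5 i) (idx5 j)))"

lemma AM_nth[simp]:
  "AM E Z a1 b1 a2 b2 $ 0 $ 0 = 0"
  "AM E Z a1 b1 a2 b2 $ 0 $ 1 = - complex_of_real E / complex_of_real (sqrt 2)"
  "AM E Z a1 b1 a2 b2 $ 0 $ 2 = \<i> * complex_of_real E / complex_of_real (sqrt 2)"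
  "AM E Z a1 b1 a2 b2 $ 0 $ 3 = 0"
  "AM E Z a1 b1 a2 b2 $ 0 $ 4 = 0"
  "AM E Z a1 b1 a2 b2 $ 1 $ 0 = complex_of_real E / complex_of_real (sqrt 2)"
  "AM E Z a1 b1 a2 b2 $ 1 $ 1 = 0"
  "AM E Z a1 b1 a2 b2 $ 1 $ 2 = \<i> * Z"
  "AM E Z a1 b1 a2 b2 $ 1 $ 3 = - a1"
  "AM E Z a1 b1 a2 b2 $ 1 $ 4 = a2"
  "AM E Z a1 b1 a2 b2 $ 2 $ 0 = - \<i> * complex_of_real E / complex_of_real (sqrt 2)"
  "AM E Z a1 b1 a2 b2 $ 2 $ 1 = - \<i> * Z"
  "AM E Z a1 b1 a2 b2 $ 2 $ 2 = 0"
  "AM E Z a1 b1 a2 b2 $ 2 $ 3 = - \<i> * b1"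
  "AM E Z a1 b1 a2 b2 $ 2 $ 4 = \<i> * b2"
  "AM E Z a1 b1 a2 b2 $ 3 $ 0 = 0"
  "AM E Z a1 b1 a2 b2 $ 3 $ 1 = a1"
  "AM E Z a1 b1 a2 b2 $ 3 $ 2 = \<i> * b1"
  "AM E Z a1 b1 a2 b2 $ 3 $ 3 = 0"
  "AM E Z a1 b1 a2 b2 $ 3 $ 4 = 0"
  "AM E Z a1 b1 a2 b2 $ 4 $ 0 = 0"
  "AM E Z a1 b1 a2 b2 $ 4 $ 1 = a2"
  "AM E Z a1 b1 a2 b2 $ 4 $ 2 = \<i> * b2"
  "AM E Z a1 b1 a2 b2 $ 4 $ 3 = 0"
  "AM E Z a1 b1 a2 b2 $ 4 $ 4 = 0"
  by (simp_all add: AM_def Let_def)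

lemma tr_eta: "(transpose X ** etaR) $ i $ j = X $ j $ i * sgnL j"
proof -
  have "(transpose X ** etaR) $ i $ j = (\<Sum>k\<in>UNIV. X $ k $ i * (if k = j then sgnL k else 0))"
    by (simp add: matrix_matrix_mult_def etaR_def transpose_def)
  also have "\<dots> = (\<Sum>k\<in>UNIV. if k = j then X $ j $ i * sgnL j else 0)"
    by (rule sum.cong) auto
  finally show ?thesis by simp
qed

lemma eta_mat: "(etaR ** X) $ i $ j = sgnL i * X $ i $ j"
proof -
  have "(etaR ** X) $ i $ j = (\<Sum>k\<in>UNIV. (if i = k then sgnL i else 0) * X $ k $ j)"
    by (simp add: matrix_matrix_mult_def etaR_def)
  also have "\<dots> = (\<Sum>k\<in>UNIV. if k = i then sgnL i * X $ i $ j else 0)"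
    by (rule sum.cong) auto
  finally show ?thesis by simp
qed

lemma so41_alpha:
  assumes "\<And>i j. complex_of_real (sgnL j) * A $ j $ i + complex_of_real (sgnL i) * A $ i $ j = 0"
  shows "so41 (alpha A v)"
  unfolding so41_def
proof (rule vec_eq_iff[THEN iffD2], intro allI, rule vec_eq_iff[THEN iffD2], intro allI)
  fix i j
  have R: "sgnL j * Re (A $ j $ i) + sgnL i * Re (A $ i $ j) = 0"
    and I: "sgnL j * Im (A $ j $ i) + sgnL i * Im (A $ i $ j) = 0"
    using assms[of j i] by (simp_all add: complex_eq_iff)
  have "(transpose (alpha A v) ** etaR + etaR ** alpha A v) $ i $ j
     = 2 * Re v * (sgnL j * Re (A $ j $ i) + sgnL i * Re (A $ i $ j))
       - 2 * Im v * (sgnL j * Im (A $ j $ i) + sgnL i * Im (A $ i $ j))"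
    by (simp add: tr_eta eta_mat alpha_def algebra_simps)
  then show "(transpose (alpha A v) ** etaR + etaR ** alpha A v) $ i $ j = 0 $ i $ j"
    using R I by simp
qed

lemma AM_skew: "complex_of_real (sgnL j) * AM E Z a1 b1 a2 b2 $ j $ i + complex_of_real (sgnL i) * AM E Z a1 b1 a2 b2 $ i $ j = 0"
  using exhaust_5[of i] exhaust_5[of j] by auto

lemma alpha_add: "alpha (A + B) v = alpha A v + alpha B v"
  by (simp add: alpha_def vec_eq_iff algebra_simps)

lemma AM_shift: "AM E Z (a1 + d) (b1 - d) (a2 + d) (b2 - d) = AM E Z a1 b1 a2 b2 + AM 0 0 d (-d) d (-d)"
  unfolding vec_eq_iff forall_5 by (simp add: algebra_simps)

lemma alpha_AM0: "alpha (AM 0 0 (complex_of_real r) (- complex_of_real r) (complex_of_real r) (- complex_of_real r)) v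
   = r *\<^sub>R alpha (AM 0 0 1 (-1) 1 (-1)) v"
  unfolding vec_eq_iff alpha_def forall_5 by (simp add: algebra_simps)

lemma MR_MI: "alpha (AM 0 0 1 (-1) 1 (-1)) 1 ** alpha (AM 0 0 1 (-1) 1 (-1)) \<i>
   = alpha (AM 0 0 1 (-1) 1 (-1)) \<i> ** alpha (AM 0 0 1 (-1) 1 (-1)) 1"
  unfolding vec_eq_iff forall_5 by (simp add: matrix_matrix_mult_def sum_5 alpha_def)

lemma MC_ident:
  fixes ux uy E :: real and a1 a2 H :: complex
  defines "A \<equiv> AM E (Complex (ux/2) (-uy/2)) a1 (a1 - H) a2 (a2 - H)"
    and "M \<equiv> AM 0 0 1 (-1) 1 (-1)"
  shows "ux *\<^sub>R alpha M \<i> - uy *\<^sub>R alpha M 1 + (alpha A 1 ** alpha M \<i> - alpha M \<i> ** alpha A 1)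
     + (alpha M 1 ** alpha A \<i> - alpha A \<i> ** alpha M 1) = 0"
  unfolding vec_eq_iff forall_5 A_def M_def
  by (simp add: matrix_matrix_mult_def sum_5 alpha_def algebra_simps)



definition Acoef :: "real \<Rightarrow> (complex \<Rightarrow> complex) \<Rightarrow> (complex \<Rightarrow> real) \<Rightarrow> (complex \<Rightarrow> real) \<Rightarrow> complex \<Rightarrow> complex \<times> complex \<times> complex \<times> complex" where
  "Acoef c \<xi> h u p = (let e = complex_of_real (exp (u p)); ei = complex_of_real (exp (- u p));
      s = complex_of_real (sqrt 2); ht = complex_of_real (h p) in
     ((ei * (\<xi> p + complex_of_real c) + e * ht) / s, (ei * (\<xi> p + complex_of_real c) - e * ht) / s,
      (ei * \<xi> p + e * ht) / s, (ei * \<xi> p - e * ht) / s))"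

lemma Amat_AM:
  "Amat c \<xi> h u t p = AM (exp (u p)) (Dz (\<lambda>q. complex_of_real (u q)) p)
     (fst (Acoef c \<xi> h u p) + complex_of_real (exp (u p) * (t / (2 * c)) / sqrt 2))
     (fst (snd (Acoef c \<xi> h u p)) - complex_of_real (exp (u p) * (t / (2 * c)) / sqrt 2))
     (fst (snd (snd (Acoef c \<xi> h u p))) + complex_of_real (exp (u p) * (t / (2 * c)) / sqrt 2))
     (snd (snd (snd (Acoef c \<xi> h u p))) - complex_of_real (exp (u p) * (t / (2 * c)) / sqrt 2))"
  unfolding vec_eq_iff forall_5
  by (simp add: Amat_def Acoef_def Let_def add_divide_distrib diff_divide_distrib algebra_simps)

lemma Acoef_diff: "fst (Acoef c \<xi> h u p) - fst (snd (Acoef c \<xi> h u p))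
   = fst (snd (snd (Acoef c \<xi> h u p))) - snd (snd (snd (Acoef c \<xi> h u p)))"
  by (simp add: Acoef_def Let_def diff_divide_distrib[symmetric] algebra_simps)



definition Lr :: "real^5 \<Rightarrow> real^5 \<Rightarrow> real" where
  "Lr x y = (\<Sum>i\<in>UNIV. sgnL i * x $ i * y $ i)"

lemma Lr_sym: "Lr x y = Lr y x"
  unfolding Lr_def by (simp add: mult.commute mult.left_commute)
lemma Lr_add_left: "Lr (x + y) z = Lr x z + Lr y z"
  unfolding Lr_def by (simp add: algebra_simps sum.distrib)
lemma Lr_add_right: "Lr z (x + y) = Lr z x + Lr z y"
  unfolding Lr_def by (simp add: algebra_simps sum.distrib)
lemma Lr_diff_left: "Lr (x - y) z = Lr x z - Lr y z"
  unfolding Lr_def by (simp add: algebra_simps sum_subtractf)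
lemma Lr_diff_right: "Lr z (x - y) = Lr z x - Lr z y"
  unfolding Lr_def by (simp add: algebra_simps sum_subtractf)
lemma Lr_minus_left: "Lr (- x) z = - Lr x z"
  unfolding Lr_def by (simp add: sum_negf)
lemma Lr_minus_right: "Lr z (- x) = - Lr z x"
  unfolding Lr_def by (simp add: sum_negf)
lemma Lr_scaleR_left: "Lr (r *\<^sub>R x) z = r * Lr x z"
  unfolding Lr_def by (simp add: sum_distrib_left algebra_simps)
lemma Lr_scaleR_right: "Lr z (r *\<^sub>R x) = r * Lr z x"
  unfolding Lr_def by (simp add: sum_distrib_left algebra_simps)
lemma Lr_zero[simp]: "Lr 0 z = 0" "Lr z 0 = 0"
  unfolding Lr_def by simp_all
lemmas Lr_lin = Lr_add_left Lr_add_right Lr_diff_left Lr_diff_right Lr_minus_left Lr_minus_right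
  Lr_scaleR_left Lr_scaleR_right

lemma dd_cong: "dd g p a b \<Longrightarrow> a = a' \<Longrightarrow> b = b' \<Longrightarrow> dd g p a' b'" by simp

lemma dd_unique: "dd g p a b \<Longrightarrow> dd g p a' b' \<Longrightarrow> a = a' \<and> b = b'"
  using dd_pd by metis

lemma dd_Lr: assumes "dd g p ag bg" "dd k p ak bk"
  shows "dd (\<lambda>q. Lr (g q) (k q)) p (Lr (g p) ak + Lr ag (k p)) (Lr (g p) bk + Lr bg (k p))"
proof -
  have "dd (\<lambda>q. \<Sum>i\<in>UNIV. sgnL i * g q $ i * k q $ i) p
      (\<Sum>i\<in>UNIV. sgnL i * g p $ i * ak $ i + (sgnL i * ag $ i + 0 * g p $ i) * k p $ i)
      (\<Sum>i\<in>UNIV. sgnL i * g p $ i * bk $ i + (sgnL i * bg $ i + 0 * g p $ i) * k p $ i)"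
    by (intro dd_sum dd_mult dd_const dd_nth assms) simp
  then show ?thesis unfolding Lr_def
    by (rule dd_cong) (simp_all add: sum.distrib algebra_simps)
qed

lemma dd_Complex: assumes "dd \<alpha> p ax ay" "dd \<beta> p bx by"
  shows "dd (\<lambda>q. Complex (\<alpha> q) (\<beta> q)) p (Complex ax bx) (Complex ay by)"
proof -
  have "dd (\<lambda>q. complex_of_real (\<alpha> q) + \<i> * complex_of_real (\<beta> q)) p
     (complex_of_real ax + \<i> * complex_of_real bx) (complex_of_real ay + \<i> * complex_of_real by)"
    by (intro dd_add dd_of_real assms dd_linear[OF bounded_linear_mult_right, of "\<lambda>q. complex_of_real (\<beta> q)" _ _ _ \<i>, simplified])
  then show ?thesis by (simp add: Complex_eq)
qed

lemma Dz_dd: "dd g p a b \<Longrightarrow> Dz g p = (a - \<i> * b) / 2"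
  unfolding Dz_def using dd_pd by metis
lemma Dzb_dd: "dd g p a b \<Longrightarrow> Dzb g p = (a + \<i> * b) / 2"
  unfolding Dzb_def using dd_pd by metis

lemma Dz_Complex: "dd \<alpha> p ax ay \<Longrightarrow> dd \<beta> p bx by \<Longrightarrow> open U \<Longrightarrow> p \<in> U \<Longrightarrow>
   (\<And>q. q \<in> U \<Longrightarrow> \<psi> q = Complex (\<alpha> q) (\<beta> q)) \<Longrightarrow>
   Dz \<psi> p = Complex ((ax + by) / 2) ((bx - ay) / 2) \<and> Dzb \<psi> p = Complex ((ax - by) / 2) ((bx + ay) / 2)"
proof -
  assume a: "dd \<alpha> p ax ay" "dd \<beta> p bx by" "open U" "p \<in> U" "\<And>q. q \<in> U \<Longrightarrow> \<psi> q = Complex (\<alpha> q) (\<beta> q)"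
  have "dd \<psi> p (Complex ax bx) (Complex ay by)"
    using dd_transfer[OF dd_Complex[OF a(1,2)] a(3,4)] a(5) by metis
  then show ?thesis using Dz_dd Dzb_dd by (simp add: complex_eq_iff)
qed

lemma cvf_nth: "cvf g q $ i = complex_of_real (g q $ i)"
  by (simp add: cvf_def)

lemma DzV_cvf: assumes "g differentiable (at q)"
  shows "DzV (cvf g) q = (\<chi> i. Complex (pdx g q $ i / 2) (- pdy g q $ i / 2))"
proof -
  have "Dz (\<lambda>p. cvf g p $ i) q = Complex (pdx g q $ i / 2) (- pdy g q $ i / 2)" for i
  proof -
    have "dd (\<lambda>p. cvf g p $ i) q (complex_of_real (pdx g q $ i)) (complex_of_real (pdy g q $ i))"
      unfolding cvf_nth by (intro dd_of_real dd_nth diff_hd assms)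
    from Dz_dd[OF this] show ?thesis by (simp add: complex_eq_iff)
  qed
  then show ?thesis unfolding DzV_def by (simp add: vec_eq_iff)
qed

lemma lor_Complex: "lor (\<chi> i. Complex (X $ i) (Y $ i)) (cvf g q) = Complex (Lr X (g q)) (Lr Y (g q))"
  unfolding lor_def Lr_def cvf_def by (simp add: complex_eq_iff Re_sum Im_sum mult.commute mult.left_commute)

lemma mm_nth: "(A ** B) $ i $ j = (\<Sum>k\<in>UNIV. A $ i $ k * B $ k $ j)"
  by (simp add: matrix_matrix_mult_def)

lemma Lr_frame: "(transpose M ** etaR ** M) $ i $ j = Lr (column i M) (column j M)"
  unfolding Lr_def column_def
  by (simp only: mm_nth[of "transpose M ** etaR"] tr_eta) (simp add: mult.commute mult.left_commute)

lemma Sx_entry: "(etaR ** transpose M ** etaR ** N) $ i $ j = sgnL i * Lr (column i M) (column j N)"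
proof -
  have "(etaR ** transpose M ** etaR ** N) = etaR ** (transpose M ** etaR ** N)"
    by (simp add: matrix_mul_assoc)
  then show ?thesis unfolding Lr_def column_def
    by (simp only: eta_mat mm_nth[of "transpose M ** etaR"] tr_eta) (simp add: mult.commute mult.left_commute)
qed



definition Gf :: "(complex \<Rightarrow> real^5) \<Rightarrow> (complex \<Rightarrow> real^5) \<Rightarrow> (complex \<Rightarrow> real^5) \<Rightarrow>
    (complex \<Rightarrow> real^5) \<Rightarrow> (complex \<Rightarrow> real^5) \<Rightarrow> 5 \<Rightarrow> complex \<Rightarrow> real^5" where
  "Gf f F1 F2 N1 N2 j = (if j = 0 then f else if j = 1 then F1 else if j = 2 then F2 else if j = 3 then N1 else N2)"

lemma Gf_simps[simp]: "Gf f F1 F2 N1 N2 0 = f" "Gf f F1 F2 N1 N2 1 = F1" "Gf f F1 F2 N1 N2 2 = F2"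
  "Gf f F1 F2 N1 N2 3 = N1" "Gf f F1 F2 N1 N2 4 = N2"
  by (simp_all add: Gf_def)

lemma column_frameF: "column j (frameF f F1 F2 N1 N2 q) = Gf f F1 F2 N1 N2 j q"
  unfolding column_def frameF_def Gf_def by (simp add: vec_eq_iff)

lemma frameF_nth: "frameF f F1 F2 N1 N2 q $ i $ j = Gf f F1 F2 N1 N2 j q $ i"
  unfolding frameF_def Gf_def by simp

lemma C2: assumes "Cinf_on U g" "open U" "q \<in> U"
  shows "g differentiable (at q)" "pdx g differentiable (at q)" "pdy g differentiable (at q)"
proof -
  have "Ck_on (Suc (Suc 0)) U g" using assms(1) unfolding Cinf_on_def by blast
  then have "g differentiable_on U" "pdx g differentiable_on U" "pdy g differentiable_on U" by auto
  then show "g differentiable (at q)" "pdx g differentiable (at q)" "pdy g differentiable (at q)"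
    using assms(2,3) differentiable_on_eq_differentiable_at by blast+
qed

locale MT =
  fixes U :: "complex set"
    and f F1 F2 N1 N2 :: "complex \<Rightarrow> real^5"
    and u h :: "complex \<Rightarrow> real"
    and \<xi> :: "complex \<Rightarrow> complex"
    and c :: real
  assumes U: "open U"
    and smooth: "Cinf_on U f" "Cinf_on U F1" "Cinf_on U F2" "Cinf_on U N1" "Cinf_on U N2"
       "Cinf_on U u"
    and frame: "\<And>p. p \<in> U \<Longrightarrow> SOp41 (frameF f F1 F2 N1 N2 p)"
    and fz: "\<And>p. p \<in> U \<Longrightarrow> DzV (cvf f) p
        = complex_of_real (exp (u p) / sqrt 2) *s (cvf F1 p - \<i> *s cvf F2 p)"
    and xi2: "\<And>p. p \<in> U \<Longrightarrow> \<xi> p = - lor (DzV (DzV (cvf f)) p) (cvf N2 p)"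
    and xi1: "\<And>p. p \<in> U \<Longrightarrow> lor (DzV (DzV (cvf f)) p) (cvf N1 p) = \<xi> p + complex_of_real c"
    and mtrapped: "\<And>p. p \<in> U \<Longrightarrow> DzbV (DzV (cvf f)) p
        = - complex_of_real (exp (2 * u p)) *s cvf f p
          + complex_of_real (exp (2 * u p) * h p) *s (cvf N1 p + cvf N2 p)"
    and parallel: "\<And>p. p \<in> U \<Longrightarrow> lor (DzV (cvf N1) p) (cvf N2 p) = 0"
begin

abbreviation "G \<equiv> Gf f F1 F2 N1 N2"
abbreviation "FF \<equiv> frameF f F1 F2 N1 N2"

lemma smoothG: "Cinf_on U (G j)"
  using smooth exhaust_5[of j] by (auto simp: Gf_def)

lemma dG: assumes "q \<in> U"
  shows "dd (G j) q (pdx (G j) q) (pdy (G j) q)"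
    "dd (pdx (G j)) q (pdx (pdx (G j)) q) (pdy (pdx (G j)) q)"
    "dd (pdy (G j)) q (pdx (pdy (G j)) q) (pdy (pdy (G j)) q)"
  using C2[OF smoothG U assms] by (auto intro: diff_hd)

lemma du: assumes "q \<in> U" shows "dd u q (pdx u q) (pdy u q)"
  using C2[OF smooth(6) U assms] by (auto intro: diff_hd)

lemma orth: assumes "q \<in> U" shows "Lr (G i q) (G j q) = (if i = j then sgnL i else 0)"
proof -
  have "(transpose (FF q) ** etaR ** FF q) $ i $ j = etaR $ i $ j"
    using frame[OF assms] unfolding SOp41_def by simp
  then have "Lr (G i q) (G j q) = etaR $ i $ j" by (simp only: Lr_frame column_frameF)
  then show ?thesis by (simp add: etaR_def)
qed

lemma skew: assumes "q \<in> U"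
  shows "Lr (G i q) (pdx (G j) q) + Lr (G j q) (pdx (G i) q) = 0"
    "Lr (G i q) (pdy (G j) q) + Lr (G j q) (pdy (G i) q) = 0"
proof -
  have d1: "dd (\<lambda>q. Lr (G i q) (G j q)) q (Lr (G i q) (pdx (G j) q) + Lr (pdx (G i) q) (G j q))
      (Lr (G i q) (pdy (G j) q) + Lr (pdy (G i) q) (G j q))"
    by (intro dd_Lr dG assms)
  have d2: "dd (\<lambda>q. Lr (G i q) (G j q)) q 0 0"
    by (rule dd_transfer[OF dd_const U assms]) (simp add: orth)
  from dd_unique[OF d1 d2] show "Lr (G i q) (pdx (G j) q) + Lr (G j q) (pdx (G i) q) = 0"
    "Lr (G i q) (pdy (G j) q) + Lr (G j q) (pdy (G i) q) = 0" by (simp_all add: Lr_sym)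
qed

lemma dFF: assumes "q \<in> U"
  shows "dd FF q (\<chi> i j. pdx (G j) q $ i) (\<chi> i j. pdy (G j) q $ i)"
  by (intro dd_vec) (simp add: frameF_nth dd_nth dG(1)[OF assms])

lemma dbase: assumes "q \<in> U"
  shows "dd f q (pdx f q) (pdy f q)" "dd F1 q (pdx F1 q) (pdy F1 q)" "dd F2 q (pdx F2 q) (pdy F2 q)"
    "dd N1 q (pdx N1 q) (pdy N1 q)" "dd N2 q (pdx N2 q) (pdy N2 q)"
  using dG(1)[OF assms, of 0] dG(1)[OF assms, of 1] dG(1)[OF assms, of 2] dG(1)[OF assms, of 3]
    dG(1)[OF assms, of 4] by simp_all

lemma fz_real: assumes "q \<in> U"
  shows "pdx f q = (2 * (exp (u q) / sqrt 2)) *\<^sub>R F1 q" "pdy f q = (2 * (exp (u q) / sqrt 2)) *\<^sub>R F2 q"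
proof -
  have e: "Complex (pdx f q $ i / 2) (- pdy f q $ i / 2) = complex_of_real (exp (u q) / sqrt 2)
      * (complex_of_real (F1 q $ i) - \<i> * complex_of_real (F2 q $ i))" for i
  proof -
    have h1: "DzV (cvf f) q $ i = Complex (pdx f q $ i / 2) (- pdy f q $ i / 2)"
      using DzV_cvf[OF dd_diff[OF dbase(1)[OF assms]]] by simp
    have h2: "DzV (cvf f) q $ i = complex_of_real (exp (u q) / sqrt 2)
      * (complex_of_real (F1 q $ i) - \<i> * complex_of_real (F2 q $ i))"
      unfolding fz[OF assms] by (simp add: cvf_nth right_diff_distrib diff_divide_distrib mult.assoc)
    show ?thesis using h1 h2 by metis
  qed
  show "pdx f q = (2 * (exp (u q) / sqrt 2)) *\<^sub>R F1 q" "pdy f q = (2 * (exp (u q) / sqrt 2)) *\<^sub>R F2 q"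
    using e by (simp_all add: vec_eq_iff complex_eq_iff field_simps)
qed

lemma psi: assumes "q \<in> U"
  shows "DzV (cvf f) q $ i = Complex (exp (u q) / sqrt 2 * F1 q $ i) (- (exp (u q) / sqrt 2 * F2 q $ i))"
  using DzV_cvf[OF dd_diff[OF dbase(1)[OF assms]]] fz_real[OF assms] by simp

lemma dK0: assumes "q \<in> U"
  shows "dd (\<lambda>q. exp (u q) / sqrt 2) q (exp (u q) / sqrt 2 * pdx u q) (exp (u q) / sqrt 2 * pdy u q)"
  using dd_linear[OF bounded_linear_divide[of "sqrt 2"] dd_exp[OF du[OF assms]]] by simp

lemma D2: assumes q: "q \<in> U"
  defines "K \<equiv> exp (u q) / sqrt 2" and "ux \<equiv> pdx u q" and "uy \<equiv> pdy u q"
  shows "DzV (DzV (cvf f)) q = (\<chi> i. Complex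
      (((1/2) *\<^sub>R ((K*ux) *\<^sub>R F1 q + K *\<^sub>R pdx F1 q - (K*uy) *\<^sub>R F2 q - K *\<^sub>R pdy F2 q)) $ i)
      (((1/2) *\<^sub>R (- (K*ux) *\<^sub>R F2 q - K *\<^sub>R pdx F2 q - (K*uy) *\<^sub>R F1 q - K *\<^sub>R pdy F1 q)) $ i))"
   "DzbV (DzV (cvf f)) q = (\<chi> i. Complex
      (((1/2) *\<^sub>R ((K*ux) *\<^sub>R F1 q + K *\<^sub>R pdx F1 q + (K*uy) *\<^sub>R F2 q + K *\<^sub>R pdy F2 q)) $ i)
      (((1/2) *\<^sub>R (- (K*ux) *\<^sub>R F2 q - K *\<^sub>R pdx F2 q + (K*uy) *\<^sub>R F1 q + K *\<^sub>R pdy F1 q)) $ i))"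
proof -
  have "Dz (\<lambda>p. DzV (cvf f) p $ i) q = Complex
      (((1/2) *\<^sub>R ((K*ux) *\<^sub>R F1 q + K *\<^sub>R pdx F1 q - (K*uy) *\<^sub>R F2 q - K *\<^sub>R pdy F2 q)) $ i)
      (((1/2) *\<^sub>R (- (K*ux) *\<^sub>R F2 q - K *\<^sub>R pdx F2 q - (K*uy) *\<^sub>R F1 q - K *\<^sub>R pdy F1 q)) $ i)
    \<and> Dzb (\<lambda>p. DzV (cvf f) p $ i) q = Complex
      (((1/2) *\<^sub>R ((K*ux) *\<^sub>R F1 q + K *\<^sub>R pdx F1 q + (K*uy) *\<^sub>R F2 q + K *\<^sub>R pdy F2 q)) $ i)
      (((1/2) *\<^sub>R (- (K*ux) *\<^sub>R F2 q - K *\<^sub>R pdx F2 q + (K*uy) *\<^sub>R F1 q + K *\<^sub>R pdy F1 q)) $ i)" for i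
  proof -
    have a: "dd (\<lambda>p. exp (u p) / sqrt 2 * F1 p $ i) q (K * pdx F1 q $ i + K * ux * F1 q $ i)
        (K * pdy F1 q $ i + K * uy * F1 q $ i)"
      using dd_mult[OF dK0[OF q] dd_nth[OF dbase(2)[OF q]]] unfolding K_def ux_def uy_def .
    have b: "dd (\<lambda>p. - (exp (u p) / sqrt 2 * F2 p $ i)) q (- (K * pdx F2 q $ i + K * ux * F2 q $ i))
        (- (K * pdy F2 q $ i + K * uy * F2 q $ i))"
      using dd_minus[OF dd_mult[OF dK0[OF q] dd_nth[OF dbase(3)[OF q]]]] unfolding K_def ux_def uy_def .
    show ?thesis using Dz_Complex[OF a b U q, of "\<lambda>p. DzV (cvf f) p $ i"] psi
      by (simp add: field_simps)
  qed
  then show "DzV (DzV (cvf f)) q = (\<chi> i. Complex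
      (((1/2) *\<^sub>R ((K*ux) *\<^sub>R F1 q + K *\<^sub>R pdx F1 q - (K*uy) *\<^sub>R F2 q - K *\<^sub>R pdy F2 q)) $ i)
      (((1/2) *\<^sub>R (- (K*ux) *\<^sub>R F2 q - K *\<^sub>R pdx F2 q - (K*uy) *\<^sub>R F1 q - K *\<^sub>R pdy F1 q)) $ i))"
   "DzbV (DzV (cvf f)) q = (\<chi> i. Complex
      (((1/2) *\<^sub>R ((K*ux) *\<^sub>R F1 q + K *\<^sub>R pdx F1 q + (K*uy) *\<^sub>R F2 q + K *\<^sub>R pdy F2 q)) $ i)
      (((1/2) *\<^sub>R (- (K*ux) *\<^sub>R F2 q - K *\<^sub>R pdx F2 q + (K*uy) *\<^sub>R F1 q + K *\<^sub>R pdy F1 q)) $ i))"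
    unfolding DzV_def DzbV_def by (simp_all add: vec_eq_iff)
qed

end


lemma final_alg:
  fixes E ux uy h xr xi c :: real and TX TY :: "5 \<Rightarrow> 5 \<Rightarrow> real"
  assumes E: "E > 0"
    and K: "K = E / sqrt 2"
    and H0x: "\<And>i. TX i 0 = (if i = 1 then 2 * K else 0)"
    and H0y: "\<And>i. TY i 0 = (if i = 2 then 2 * K else 0)"
    and Hsx: "\<And>i j. TX i j + TX j i = 0"
    and Hsy: "\<And>i j. TY i j + TY j i = 0"
    and H12: "K * ux + K * TY 1 2 = 0"
    and H21: "K * TX 2 1 + K * uy = 0"
    and H31: "K * TX 3 1 + K * TY 3 2 = 2 * (E * E * h)"
    and H32: "K * TY 3 1 - K * TX 3 2 = 0"
    and H41: "K * TX 4 1 + K * TY 4 2 = - 2 * (E * E * h)"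
    and H42: "K * TY 4 1 - K * TX 4 2 = 0"
    and X1r: "K * TX 3 1 - K * TY 3 2 = 2 * (xr + c)"
    and X1i: "- K * TX 3 2 - K * TY 3 1 = 2 * xi"
    and X2r: "K * TX 4 1 - K * TY 4 2 = - 2 * xr"
    and X2i: "- K * TX 4 2 - K * TY 4 1 = - 2 * xi"
    and H43: "TX 4 3 = 0" "TY 4 3 = 0"
  defines "a1 \<equiv> (complex_of_real (inverse E) * (Complex xr xi + complex_of_real c) + complex_of_real E * complex_of_real h) / complex_of_real (sqrt 2)"
    and "b1 \<equiv> (complex_of_real (inverse E) * (Complex xr xi + complex_of_real c) - complex_of_real E * complex_of_real h) / complex_of_real (sqrt 2)"
    and "a2 \<equiv> (complex_of_real (inverse E) * Complex xr xi + complex_of_real E * complex_of_real h) / complex_of_real (sqrt 2)"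
    and "b2 \<equiv> (complex_of_real (inverse E) * Complex xr xi - complex_of_real E * complex_of_real h) / complex_of_real (sqrt 2)"
  shows "(\<chi> i j. sgnL i * TX i j) = alpha (AM E (Complex (ux/2) (-uy/2)) a1 b1 a2 b2) 1"
    "(\<chi> i j. sgnL i * TY i j) = alpha (AM E (Complex (ux/2) (-uy/2)) a1 b1 a2 b2) \<i>"
proof -
  have s2: "sqrt 2 * sqrt 2 = (2::real)" by simp
  have Kpos: "K > 0" using E K by simp
  have diagx: "TX i i = 0" for i using Hsx[of i i] by simp
  have diagy: "TY i i = 0" for i using Hsy[of i i] by simp
  have ax: "TX i j = - TX j i" for i j using Hsx[of i j] by simp
  have ay: "TY i j = - TY j i" for i j using Hsy[of i j] by simp
  have t21: "TX 2 1 = - uy" using H21 Kpos by (simp add: ring_distribs[symmetric])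
  have t12: "TY 1 2 = - ux" using H12 Kpos by (simp add: ring_distribs[symmetric] add_eq_0_iff)
  have k31: "K * TX 3 1 = E * E * h + xr + c" using H31 X1r by algebra
  have k32y: "K * TY 3 2 = E * E * h - xr - c" using H31 X1r by algebra
  have k32: "K * TX 3 2 = - xi" using H32 X1i by algebra
  have k31y: "K * TY 3 1 = - xi" using H32 X1i by algebra
  have k41: "K * TX 4 1 = - E * E * h - xr" using H41 X2r by algebra
  have k42y: "K * TY 4 2 = xr - E * E * h" using H41 X2r by algebra
  have k42: "K * TX 4 2 = xi" using H42 X2i by algebra
  have k41y: "K * TY 4 1 = xi" using H42 X2i by algebra
  have Kn: "K \<noteq> 0" using Kpos by simp
  have v31: "TX 3 1 = (E * E * h + xr + c) / K" using k31 Kn by (simp add: field_simps)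
  have v32y: "TY 3 2 = (E * E * h - xr - c) / K" using k32y Kn by (simp add: field_simps)
  have v32: "TX 3 2 = - xi / K" using k32 Kn by (simp add: field_simps)
  have v31y: "TY 3 1 = - xi / K" using k31y Kn by (simp add: field_simps)
  have v41: "TX 4 1 = (- E * E * h - xr) / K" using k41 Kn by (simp add: field_simps)
  have v42y: "TY 4 2 = (xr - E * E * h) / K" using k42y Kn by (simp add: field_simps)
  have v42: "TX 4 2 = xi / K" using k42 Kn by (simp add: field_simps)
  have v41y: "TY 4 1 = xi / K" using k41y Kn by (simp add: field_simps)
  note vals = v31 v32y v32 v31y v41 v42y v42 v41y t21 t12 H43 diagx diagy H0x H0y
  show "(\<chi> i j. sgnL i * TX i j) = alpha (AM E (Complex (ux/2) (-uy/2)) a1 b1 a2 b2) 1"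
    unfolding vec_eq_iff forall_5 alpha_def a1_def b1_def a2_def b2_def
    apply (simp add: vals ax[of 0] ax[of 1 3] ax[of 1 4] ax[of 2 3] ax[of 2 4] ax[of 3 4] ax[of 1 2])
    using E by (simp add: K field_simps power2_eq_square)
  show "(\<chi> i j. sgnL i * TY i j) = alpha (AM E (Complex (ux/2) (-uy/2)) a1 b1 a2 b2) \<i>"
    unfolding vec_eq_iff forall_5 alpha_def a1_def b1_def a2_def b2_def
    apply (simp add: vals ay[of 0] ay[of 1 3] ay[of 1 4] ay[of 2 3] ay[of 2 4] ay[of 3 4] ay[of 2 1])
    using E by (simp add: K field_simps power2_eq_square)
qed



lemma exp2: "exp (2 * x) = exp x * exp (x::real)"
  by (simp add: exp_add[symmetric])

context MT begin

lemma orth_vals: assumes q: "q \<in> U" shows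
    "Lr (f q) (f q) = 1"
    "Lr (f q) (F1 q) = 0"
    "Lr (f q) (F2 q) = 0"
    "Lr (f q) (N1 q) = 0"
    "Lr (f q) (N2 q) = 0"
    "Lr (F1 q) (f q) = 0"
    "Lr (F1 q) (F1 q) = 1"
    "Lr (F1 q) (F2 q) = 0"
    "Lr (F1 q) (N1 q) = 0"
    "Lr (F1 q) (N2 q) = 0"
    "Lr (F2 q) (f q) = 0"
    "Lr (F2 q) (F1 q) = 0"
    "Lr (F2 q) (F2 q) = 1"
    "Lr (F2 q) (N1 q) = 0"
    "Lr (F2 q) (N2 q) = 0"
    "Lr (N1 q) (f q) = 0"
    "Lr (N1 q) (F1 q) = 0"
    "Lr (N1 q) (F2 q) = 0"
    "Lr (N1 q) (N1 q) = 1"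
    "Lr (N1 q) (N2 q) = 0"
    "Lr (N2 q) (f q) = 0"
    "Lr (N2 q) (F1 q) = 0"
    "Lr (N2 q) (F2 q) = 0"
    "Lr (N2 q) (N1 q) = 0"
    "Lr (N2 q) (N2 q) = -1"
  using orth[OF q, of 0 0] orth[OF q, of 0 1] orth[OF q, of 0 2] orth[OF q, of 0 3] orth[OF q, of 0 4] orth[OF q, of 1 0] orth[OF q, of 1 1] orth[OF q, of 1 2] orth[OF q, of 1 3] orth[OF q, of 1 4] orth[OF q, of 2 0] orth[OF q, of 2 1] orth[OF q, of 2 2] orth[OF q, of 2 3] orth[OF q, of 2 4] orth[OF q, of 3 0] orth[OF q, of 3 1] orth[OF q, of 3 2] orth[OF q, of 3 3] orth[OF q, of 3 4] orth[OF q, of 4 0] orth[OF q, of 4 1] orth[OF q, of 4 2] orth[OF q, of 4 3] orth[OF q, of 4 4] by simp_all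

lemma diag_vals: assumes q: "q \<in> U" shows
    "Lr (f q) (pdx f q) = 0"
    "Lr (f q) (pdy f q) = 0"
    "Lr (F1 q) (pdx F1 q) = 0"
    "Lr (F1 q) (pdy F1 q) = 0"
    "Lr (F2 q) (pdx F2 q) = 0"
    "Lr (F2 q) (pdy F2 q) = 0"
    "Lr (N1 q) (pdx N1 q) = 0"
    "Lr (N1 q) (pdy N1 q) = 0"
    "Lr (N2 q) (pdx N2 q) = 0"
    "Lr (N2 q) (pdy N2 q) = 0"
  using skew[OF q, of 0 0] skew[OF q, of 1 1] skew[OF q, of 2 2] skew[OF q, of 3 3] skew[OF q, of 4 4] by simp_all

lemma mtr_vec: assumes q: "q \<in> U"
  defines "K \<equiv> exp (u q) / sqrt 2" and "ux \<equiv> pdx u q" and "uy \<equiv> pdy u q"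
  shows "(1/2) *\<^sub>R ((K*ux) *\<^sub>R F1 q + K *\<^sub>R pdx F1 q + (K*uy) *\<^sub>R F2 q + K *\<^sub>R pdy F2 q)
       = (- exp (2 * u q)) *\<^sub>R f q + (exp (2 * u q) * h q) *\<^sub>R (N1 q + N2 q)"
    "(1/2) *\<^sub>R (- (K*ux) *\<^sub>R F2 q - K *\<^sub>R pdx F2 q + (K*uy) *\<^sub>R F1 q + K *\<^sub>R pdy F1 q) = 0"
proof -
  have e: "Complex
      (((1/2) *\<^sub>R ((K*ux) *\<^sub>R F1 q + K *\<^sub>R pdx F1 q + (K*uy) *\<^sub>R F2 q + K *\<^sub>R pdy F2 q)) $ i)
      (((1/2) *\<^sub>R (- (K*ux) *\<^sub>R F2 q - K *\<^sub>R pdx F2 q + (K*uy) *\<^sub>R F1 q + K *\<^sub>R pdy F1 q)) $ i)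
    = (- complex_of_real (exp (2 * u q)) *s cvf f q
          + complex_of_real (exp (2 * u q) * h q) *s (cvf N1 q + cvf N2 q)) $ i" for i
    using arg_cong[OF mtrapped[OF q], of "\<lambda>v. v $ i"] D2(2)[OF q] unfolding K_def ux_def uy_def by simp
  have ei: "((1/2) *\<^sub>R ((K*ux) *\<^sub>R F1 q + K *\<^sub>R pdx F1 q + (K*uy) *\<^sub>R F2 q + K *\<^sub>R pdy F2 q)) $ i
       = ((- exp (2 * u q)) *\<^sub>R f q + (exp (2 * u q) * h q) *\<^sub>R (N1 q + N2 q)) $ i
     \<and> ((1/2) *\<^sub>R (- (K*ux) *\<^sub>R F2 q - K *\<^sub>R pdx F2 q + (K*uy) *\<^sub>R F1 q + K *\<^sub>R pdy F1 q)) $ i = (0::real^5) $ i" for i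
    using e[of i] by (simp add: complex_eq_iff cvf_nth algebra_simps)
  then show "(1/2) *\<^sub>R ((K*ux) *\<^sub>R F1 q + K *\<^sub>R pdx F1 q + (K*uy) *\<^sub>R F2 q + K *\<^sub>R pdy F2 q)
       = (- exp (2 * u q)) *\<^sub>R f q + (exp (2 * u q) * h q) *\<^sub>R (N1 q + N2 q)"
    "(1/2) *\<^sub>R (- (K*ux) *\<^sub>R F2 q - K *\<^sub>R pdx F2 q + (K*uy) *\<^sub>R F1 q + K *\<^sub>R pdy F1 q) = 0"
    unfolding vec_eq_iff by blast+
qed

lemma xi_vals: assumes q: "q \<in> U"
  defines "K \<equiv> exp (u q) / sqrt 2" and "ux \<equiv> pdx u q" and "uy \<equiv> pdy u q"
  defines "X \<equiv> (1/2) *\<^sub>R ((K*ux) *\<^sub>R F1 q + K *\<^sub>R pdx F1 q - (K*uy) *\<^sub>R F2 q - K *\<^sub>R pdy F2 q)"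
    and "Y \<equiv> (1/2) *\<^sub>R (- (K*ux) *\<^sub>R F2 q - K *\<^sub>R pdx F2 q - (K*uy) *\<^sub>R F1 q - K *\<^sub>R pdy F1 q)"
  shows "Lr (N1 q) X = Re (\<xi> q) + c" "Lr (N1 q) Y = Im (\<xi> q)"
    "Lr (N2 q) X = - Re (\<xi> q)" "Lr (N2 q) Y = - Im (\<xi> q)"
proof -
  have D: "DzV (DzV (cvf f)) q = (\<chi> i. Complex (X $ i) (Y $ i))"
    using D2(1)[OF q] unfolding X_def Y_def K_def ux_def uy_def .
  have 1: "Complex (Lr X (N1 q)) (Lr Y (N1 q)) = \<xi> q + complex_of_real c"
    using xi1[OF q] unfolding D lor_Complex .
  have 2: "\<xi> q = - Complex (Lr X (N2 q)) (Lr Y (N2 q))"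
    using xi2[OF q] unfolding D lor_Complex .
  show "Lr (N1 q) X = Re (\<xi> q) + c" "Lr (N1 q) Y = Im (\<xi> q)"
    "Lr (N2 q) X = - Re (\<xi> q)" "Lr (N2 q) Y = - Im (\<xi> q)"
    using 1 2 by (auto simp: complex_eq_iff Lr_sym)
qed

lemma par_vals: assumes q: "q \<in> U"
  shows "Lr (N2 q) (pdx N1 q) = 0" "Lr (N2 q) (pdy N1 q) = 0"
proof -
  have D: "DzV (cvf N1) q = (\<chi> i. Complex (((1/2) *\<^sub>R pdx N1 q) $ i) (((-1/2) *\<^sub>R pdy N1 q) $ i))"
    using DzV_cvf[OF dd_diff[OF dbase(4)[OF q]]] by simp
  have "Complex (Lr ((1/2) *\<^sub>R pdx N1 q) (N2 q)) (Lr ((-1/2) *\<^sub>R pdy N1 q) (N2 q)) = 0"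
    using parallel[OF q] unfolding D lor_Complex .
  then show "Lr (N2 q) (pdx N1 q) = 0" "Lr (N2 q) (pdy N1 q) = 0"
    by (auto simp: complex_eq_iff Lr_sym Lr_scaleR_left Lr_scaleR_right Lr_minus_right)
qed

lemma Tfacts: assumes q: "q \<in> U"
  defines "K \<equiv> exp (u q) / sqrt 2" and "ux \<equiv> pdx u q" and "uy \<equiv> pdy u q" and "E \<equiv> exp (u q)"
  shows "K * ux + K * Lr (F1 q) (pdy F2 q) = 0"
    "K * Lr (F2 q) (pdx F1 q) + K * uy = 0"
    "K * Lr (N1 q) (pdx F1 q) + K * Lr (N1 q) (pdy F2 q) = 2 * (E * E * h q)"
    "K * Lr (N1 q) (pdy F1 q) - K * Lr (N1 q) (pdx F2 q) = 0"
    "K * Lr (N2 q) (pdx F1 q) + K * Lr (N2 q) (pdy F2 q) = - 2 * (E * E * h q)"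
    "K * Lr (N2 q) (pdy F1 q) - K * Lr (N2 q) (pdx F2 q) = 0"
    "K * Lr (N1 q) (pdx F1 q) - K * Lr (N1 q) (pdy F2 q) = 2 * (Re (\<xi> q) + c)"
    "- K * Lr (N1 q) (pdx F2 q) - K * Lr (N1 q) (pdy F1 q) = 2 * Im (\<xi> q)"
    "K * Lr (N2 q) (pdx F1 q) - K * Lr (N2 q) (pdy F2 q) = - 2 * Re (\<xi> q)"
    "- K * Lr (N2 q) (pdx F2 q) - K * Lr (N2 q) (pdy F1 q) = - 2 * Im (\<xi> q)"
proof -
  note M = mtr_vec[OF q, folded K_def ux_def uy_def]
  note X = xi_vals[OF q, folded K_def ux_def uy_def]
  note simps = Lr_lin orth_vals[OF q] diag_vals[OF q] exp2 E_def[symmetric]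
  have "Lr (F1 q) ((1/2) *\<^sub>R ((K*ux) *\<^sub>R F1 q + K *\<^sub>R pdx F1 q + (K*uy) *\<^sub>R F2 q + K *\<^sub>R pdy F2 q))
       = Lr (F1 q) ((- exp (2 * u q)) *\<^sub>R f q + (exp (2 * u q) * h q) *\<^sub>R (N1 q + N2 q))" by (simp only: M(1))
  then show "K * ux + K * Lr (F1 q) (pdy F2 q) = 0" by (simp add: simps)
  have "Lr (F2 q) ((1/2) *\<^sub>R ((K*ux) *\<^sub>R F1 q + K *\<^sub>R pdx F1 q + (K*uy) *\<^sub>R F2 q + K *\<^sub>R pdy F2 q))
       = Lr (F2 q) ((- exp (2 * u q)) *\<^sub>R f q + (exp (2 * u q) * h q) *\<^sub>R (N1 q + N2 q))" by (simp only: M(1))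
  then show "K * Lr (F2 q) (pdx F1 q) + K * uy = 0" by (simp add: simps)
  have "Lr (N1 q) ((1/2) *\<^sub>R ((K*ux) *\<^sub>R F1 q + K *\<^sub>R pdx F1 q + (K*uy) *\<^sub>R F2 q + K *\<^sub>R pdy F2 q))
       = Lr (N1 q) ((- exp (2 * u q)) *\<^sub>R f q + (exp (2 * u q) * h q) *\<^sub>R (N1 q + N2 q))" by (simp only: M(1))
  then show "K * Lr (N1 q) (pdx F1 q) + K * Lr (N1 q) (pdy F2 q) = 2 * (E * E * h q)" by (simp add: simps)
  have "Lr (N2 q) ((1/2) *\<^sub>R ((K*ux) *\<^sub>R F1 q + K *\<^sub>R pdx F1 q + (K*uy) *\<^sub>R F2 q + K *\<^sub>R pdy F2 q))
       = Lr (N2 q) ((- exp (2 * u q)) *\<^sub>R f q + (exp (2 * u q) * h q) *\<^sub>R (N1 q + N2 q))" by (simp only: M(1))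
  then show "K * Lr (N2 q) (pdx F1 q) + K * Lr (N2 q) (pdy F2 q) = - 2 * (E * E * h q)" by (simp add: simps)
  have "Lr (N1 q) ((1/2) *\<^sub>R (- (K*ux) *\<^sub>R F2 q - K *\<^sub>R pdx F2 q + (K*uy) *\<^sub>R F1 q + K *\<^sub>R pdy F1 q)) = Lr (N1 q) 0"
    by (simp only: M(2))
  then show "K * Lr (N1 q) (pdy F1 q) - K * Lr (N1 q) (pdx F2 q) = 0" by (simp add: simps)
  have "Lr (N2 q) ((1/2) *\<^sub>R (- (K*ux) *\<^sub>R F2 q - K *\<^sub>R pdx F2 q + (K*uy) *\<^sub>R F1 q + K *\<^sub>R pdy F1 q)) = Lr (N2 q) 0"
    by (simp only: M(2))
  then show "K * Lr (N2 q) (pdy F1 q) - K * Lr (N2 q) (pdx F2 q) = 0" by (simp add: simps)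
  show "K * Lr (N1 q) (pdx F1 q) - K * Lr (N1 q) (pdy F2 q) = 2 * (Re (\<xi> q) + c)"
    using X(1) by (simp add: simps)
  show "- K * Lr (N1 q) (pdx F2 q) - K * Lr (N1 q) (pdy F1 q) = 2 * Im (\<xi> q)"
    using X(2) by (simp add: simps)
  show "K * Lr (N2 q) (pdx F1 q) - K * Lr (N2 q) (pdy F2 q) = - 2 * Re (\<xi> q)"
    using X(3) by (simp add: simps)
  show "- K * Lr (N2 q) (pdx F2 q) - K * Lr (N2 q) (pdy F1 q) = - 2 * Im (\<xi> q)"
    using X(4) by (simp add: simps)
qed

lemma Dzu: assumes q: "q \<in> U"
  shows "Dz (\<lambda>q. complex_of_real (u q)) q = Complex (pdx u q / 2) (- pdy u q / 2)"
  using Dz_dd[OF dd_of_real[OF du[OF q]]] by (simp add: complex_eq_iff)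

lemma Amat0: assumes q: "q \<in> U"
  shows "Amat c \<xi> h u 0 q = AM (exp (u q)) (Complex (pdx u q / 2) (- pdy u q / 2))
     ((complex_of_real (inverse (exp (u q))) * (Complex (Re (\<xi> q)) (Im (\<xi> q)) + complex_of_real c) + complex_of_real (exp (u q)) * complex_of_real (h q)) / complex_of_real (sqrt 2))
     ((complex_of_real (inverse (exp (u q))) * (Complex (Re (\<xi> q)) (Im (\<xi> q)) + complex_of_real c) - complex_of_real (exp (u q)) * complex_of_real (h q)) / complex_of_real (sqrt 2))
     ((complex_of_real (inverse (exp (u q))) * Complex (Re (\<xi> q)) (Im (\<xi> q)) + complex_of_real (exp (u q)) * complex_of_real (h q)) / complex_of_real (sqrt 2))
     ((complex_of_real (inverse (exp (u q))) * Complex (Re (\<xi> q)) (Im (\<xi> q)) - complex_of_real (exp (u q)) * complex_of_real (h q)) / complex_of_real (sqrt 2))"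
  unfolding Amat_AM by (simp add: Acoef_def Let_def Dzu[OF q] exp_minus)

lemma Sxy_alpha: assumes q: "q \<in> U"
  shows "(\<chi> i j. sgnL i * Lr (G i q) (pdx (G j) q)) = alpha (Amat c \<xi> h u 0 q) 1"
    "(\<chi> i j. sgnL i * Lr (G i q) (pdy (G j) q)) = alpha (Amat c \<xi> h u 0 q) \<i>"
proof -
  define TX where "TX i j = Lr (G i q) (pdx (G j) q)" for i j
  define TY where "TY i j = Lr (G i q) (pdy (G j) q)" for i j
  have H0x: "TX i 0 = (if i = 1 then 2 * (exp (u q) / sqrt 2) else 0)" for i
    using orth[OF q, of i 1] by (auto simp: TX_def fz_real[OF q] Lr_scaleR_right)
  have H0y: "TY i 0 = (if i = 2 then 2 * (exp (u q) / sqrt 2) else 0)" for i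
    using orth[OF q, of i 2] by (auto simp: TY_def fz_real[OF q] Lr_scaleR_right)
  have Hsx: "TX i j + TX j i = 0" for i j using skew(1)[OF q] by (simp add: TX_def)
  have Hsy: "TY i j + TY j i = 0" for i j using skew(2)[OF q] by (simp add: TY_def)
  note T = Tfacts[OF q]
  have H43: "TX 4 3 = 0" "TY 4 3 = 0" using par_vals[OF q] by (simp_all add: TX_def TY_def)
  show "(\<chi> i j. sgnL i * Lr (G i q) (pdx (G j) q)) = alpha (Amat c \<xi> h u 0 q) 1"
    unfolding Amat0[OF q] TX_def[symmetric]
    by (rule final_alg(1)[where E="exp (u q)" and K="exp (u q) / sqrt 2" and TX=TX and TY=TY
      and ux="pdx u q" and uy="pdy u q" and h="h q" and xr="Re (\<xi> q)" and xi="Im (\<xi> q)" and c=c])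
      (use H0x H0y Hsx Hsy H43 T in \<open>simp_all add: TX_def TY_def\<close>)
  show "(\<chi> i j. sgnL i * Lr (G i q) (pdy (G j) q)) = alpha (Amat c \<xi> h u 0 q) \<i>"
    unfolding Amat0[OF q] TY_def[symmetric]
    by (rule final_alg(2)[where E="exp (u q)" and K="exp (u q) / sqrt 2" and TX=TX and TY=TY
      and ux="pdx u q" and uy="pdy u q" and h="h q" and xr="Re (\<xi> q)" and xi="Im (\<xi> q)" and c=c])
      (use H0x H0y Hsx Hsy H43 T in \<open>simp_all add: TX_def TY_def\<close>)
qed

end



lemma mm_add_r: "(A + B) ** C = A ** C + B ** (C :: 'a::semiring_1^'p^'n)"
  by (simp add: matrix_matrix_mult_def vec_eq_iff sum.distrib algebra_simps)
lemma mm_diff_r: "(A - B) ** C = A ** C - B ** (C :: 'a::ring_1^'p^'n)"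
  by (simp add: matrix_matrix_mult_def vec_eq_iff sum_subtractf algebra_simps)
lemma mm_diff_l: "C ** (A - B) = C ** A - C ** (B :: 'a::ring_1^'p^'n)"
  by (simp add: matrix_matrix_mult_def vec_eq_iff sum_subtractf algebra_simps)
lemma mm_minus_l: "(- A) ** C = - (A ** (C :: 'a::ring_1^'p^'n))"
  by (simp add: matrix_matrix_mult_def vec_eq_iff sum_negf)
lemma mm_minus_r: "C ** (- A) = - (C ** (A :: 'a::ring_1^'p^'n))"
  by (simp add: matrix_matrix_mult_def vec_eq_iff sum_negf)

lemma bb_mm: "bounded_bilinear ((**) :: real^'n^'m \<Rightarrow> real^'p^'n \<Rightarrow> real^'p^'m)"
  unfolding bilinear_conv_bounded_bilinear[symmetric] bilinear_def
  by (auto intro!: linearI simp: matrix_add_ldistrib mm_add_r matrix_scalar_ac scalar_matrix_assoc[symmetric])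

lemma bl_transpose: "bounded_linear (transpose :: real^'n^'m \<Rightarrow> real^'m^'n)"
  unfolding linear_conv_bounded_linear[symmetric]
  by (auto intro!: linearI simp: transpose_def vec_eq_iff)

lemma dd_mm: "dd A p aA bA \<Longrightarrow> dd B p aB bB \<Longrightarrow>
   dd (\<lambda>q. A q ** B q) p (A p ** aB + aA ** B p) (A p ** bB + bA ** B p)"
  for A :: "complex \<Rightarrow> real^'n^'m" and B :: "complex \<Rightarrow> real^'p^'n"
  by (rule dd_bilinear[OF bb_mm])

lemma dd_transpose: "dd A p a b \<Longrightarrow> dd (\<lambda>q. transpose (A q)) p (transpose a) (transpose b)"
  for A :: "complex \<Rightarrow> real^'n^'m"
  by (rule dd_linear[OF bl_transpose])

lemma matrix_inv_eq: fixes A B :: "real^'n^'n" assumes "B ** A = mat 1" shows "matrix_inv A = B"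
proof -
  have AB: "A ** B = mat 1" using assms matrix_left_right_inverse by blast
  have ex: "A ** B = mat 1 \<and> B ** A = mat 1" using AB assms by blast
  have "A ** matrix_inv A = mat 1 \<and> matrix_inv A ** A = mat 1"
    unfolding matrix_inv_def by (rule someI[of _ B]) (rule ex)
  then have "matrix_inv A = matrix_inv A ** (A ** B)" using AB by simp
  also have "\<dots> = B" using \<open>A ** matrix_inv A = mat 1 \<and> matrix_inv A ** A = mat 1\<close>
    by (simp add: matrix_mul_assoc)
  finally show ?thesis .
qed

lemma alpha_lin: "alpha A v = Re v *\<^sub>R alpha A 1 + Im v *\<^sub>R alpha A \<i>"
  unfolding alpha_def vec_eq_iff by (simp add: algebra_simps)

lemma etaR_sq: "etaR ** etaR = mat 1"
  unfolding vec_eq_iff by (simp only: eta_mat) (simp add: etaR_def mat_def sgnL_def)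

context MT begin

definition "Finv q = etaR ** transpose (FF q) ** etaR"

lemma Finv_left: assumes "q \<in> U" shows "Finv q ** FF q = mat 1"
proof -
  have "Finv q ** FF q = etaR ** (transpose (FF q) ** etaR ** FF q)"
    unfolding Finv_def by (simp add: matrix_mul_assoc)
  also have "\<dots> = etaR ** etaR" using frame[OF assms] unfolding SOp41_def by simp
  finally show ?thesis using etaR_sq by simp
qed

lemma Finv_right: assumes "q \<in> U" shows "FF q ** Finv q = mat 1"
  using Finv_left[OF assms] matrix_left_right_inverse by blast

lemma Finv_inv: assumes "q \<in> U" shows "matrix_inv (FF q) = Finv q"
  by (rule matrix_inv_eq[OF Finv_left[OF assms]])

lemma pdFF: assumes "q \<in> U"
  shows "pdx FF q = (\<chi> i j. pdx (G j) q $ i)" "pdy FF q = (\<chi> i j. pdy (G j) q $ i)"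
  using dd_pd[OF dFF[OF assms]] by simp_all


lemma Sx_eq: assumes "q \<in> U"
  shows "Finv q ** pdx FF q = alpha (Amat c \<xi> h u 0 q) 1"
proof -
  have cx: "column j (\<chi> i j. pdx (G j) q $ i) = pdx (G j) q" for j
    by (simp add: column_def vec_eq_iff)
  have "(Finv q ** pdx FF q) $ i $ j = (\<chi> i j. sgnL i * Lr (G i q) (pdx (G j) q)) $ i $ j" for i j
  proof -
    have "(Finv q ** pdx FF q) $ i $ j = sgnL i * Lr (column i (FF q)) (column j (\<chi> i j. pdx (G j) q $ i))"
      unfolding Finv_def pdFF[OF assms] by (rule Sx_entry)
    then show ?thesis by (simp only: column_frameF cx vec_lambda_beta)
  qed
  then show ?thesis using Sxy_alpha(1)[OF assms] by (simp add: vec_eq_iff)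
qed
lemma Sy_eq: assumes "q \<in> U"
  shows "Finv q ** pdy FF q = alpha (Amat c \<xi> h u 0 q) \<i>"
proof -
  have cx: "column j (\<chi> i j. pdy (G j) q $ i) = pdy (G j) q" for j
    by (simp add: column_def vec_eq_iff)
  have "(Finv q ** pdy FF q) $ i $ j = (\<chi> i j. sgnL i * Lr (G i q) (pdy (G j) q)) $ i $ j" for i j
  proof -
    have "(Finv q ** pdy FF q) $ i $ j = sgnL i * Lr (column i (FF q)) (column j (\<chi> i j. pdy (G j) q $ i))"
      unfolding Finv_def pdFF[OF assms] by (rule Sx_entry)
    then show ?thesis by (simp only: column_frameF cx vec_lambda_beta)
  qed
  then show ?thesis using Sxy_alpha(2)[OF assms] by (simp add: vec_eq_iff)
qed

lemma fdFF: assumes "p \<in> U"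
  shows "frechet_derivative FF (at p) v = Re v *\<^sub>R pdx FF p + Im v *\<^sub>R pdy FF p"
proof -
  have "dd FF p (pdx FF p) (pdy FF p)" using dFF[OF assms] pdFF[OF assms] by simp
  then have "(\<lambda>v. Re v *\<^sub>R pdx FF p + Im v *\<^sub>R pdy FF p) = frechet_derivative FF (at p)"
    unfolding dd_def by (rule frechet_derivative_at)
  from fun_cong[OF this, of v] show ?thesis by simp
qed

lemma part2: assumes "p \<in> U"
  shows "alpha (Amat c \<xi> h u 0 p) v = matrix_inv (FF p) ** frechet_derivative FF (at p) v"
  unfolding fdFF[OF assms] Finv_inv[OF assms] matrix_add_ldistrib matrix_scalar_ac scalar_matrix_assoc[symmetric]
    Sx_eq[OF assms] Sy_eq[OF assms] by (rule alpha_lin)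

end



context MT begin

lemma dFx: assumes p: "p \<in> U"
  shows "dd (pdx FF) p (\<chi> i j. pdx (pdx (G j)) p $ i) (\<chi> i j. pdy (pdx (G j)) p $ i)"
proof -
  have "dd (\<lambda>q. \<chi> i j. pdx (G j) q $ i) p (\<chi> i j. pdx (pdx (G j)) p $ i) (\<chi> i j. pdy (pdx (G j)) p $ i)"
    by (intro dd_vec) (simp add: dd_nth dG(2)[OF p])
  then show ?thesis by (rule dd_transfer[OF _ U p]) (simp add: pdFF)
qed

lemma dFy: assumes p: "p \<in> U"
  shows "dd (pdy FF) p (\<chi> i j. pdx (pdy (G j)) p $ i) (\<chi> i j. pdy (pdy (G j)) p $ i)"
proof -
  have "dd (\<lambda>q. \<chi> i j. pdy (G j) q $ i) p (\<chi> i j. pdx (pdy (G j)) p $ i) (\<chi> i j. pdy (pdy (G j)) p $ i)"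
    by (intro dd_vec) (simp add: dd_nth dG(3)[OF p])
  then show ?thesis by (rule dd_transfer[OF _ U p]) (simp add: pdFF)
qed

lemma schwarzFF: assumes p: "p \<in> U"
  shows "(\<chi> i j. pdy (pdx (G j)) p $ i) = (\<chi> i j. pdx (pdy (G j)) p $ i)"
proof -
  have "pdy (pdx (G j)) p $ i = pdx (pdy (G j)) p $ i" for i j
    by (rule schwarz[OF U p, of "\<lambda>q. G j q $ i" "\<lambda>q. pdx (G j) q $ i" "\<lambda>q. pdy (G j) q $ i"])
      (auto intro: dd_nth dG[OF p] dd_nth[OF dG(1)])
  then show ?thesis by (simp add: vec_eq_iff)
qed

lemma dFF': assumes p: "p \<in> U" shows "dd FF p (pdx FF p) (pdy FF p)"
  using dFF[OF p] pdFF[OF p] by simp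

lemma dFinv: assumes p: "p \<in> U"
  shows "dd Finv p (etaR ** transpose (pdx FF p) ** etaR) (etaR ** transpose (pdy FF p) ** etaR)"
proof -
  have "dd (\<lambda>q. etaR ** transpose (FF q) ** etaR) p
     ((etaR ** transpose (FF p)) ** 0 + (etaR ** transpose (pdx FF p) + 0 ** transpose (FF p)) ** etaR)
     ((etaR ** transpose (FF p)) ** 0 + (etaR ** transpose (pdy FF p) + 0 ** transpose (FF p)) ** etaR)"
    by (intro dd_mm dd_const dd_transpose dFF'[OF p])
  then show ?thesis unfolding Finv_def[abs_def] by simp
qed

lemma inv_deriv: assumes p: "p \<in> U"
  shows "Finv p ** pdx FF p + (etaR ** transpose (pdx FF p) ** etaR) ** FF p = 0"
    "Finv p ** pdy FF p + (etaR ** transpose (pdy FF p) ** etaR) ** FF p = 0"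
proof -
  have d1: "dd (\<lambda>q. Finv q ** FF q) p (Finv p ** pdx FF p + (etaR ** transpose (pdx FF p) ** etaR) ** FF p)
     (Finv p ** pdy FF p + (etaR ** transpose (pdy FF p) ** etaR) ** FF p)"
    by (intro dd_mm dFinv[OF p] dFF'[OF p])
  have d2: "dd (\<lambda>q. Finv q ** FF q) p 0 0"
    by (rule dd_transfer[OF dd_const U p]) (simp add: Finv_left)
  from dd_unique[OF d1 d2] show "Finv p ** pdx FF p + (etaR ** transpose (pdx FF p) ** etaR) ** FF p = 0"
    "Finv p ** pdy FF p + (etaR ** transpose (pdy FF p) ** etaR) ** FF p = 0" by simp_all
qed

lemma MC0: assumes p: "p \<in> U"
  obtains A B C D where "dd (\<lambda>q. Finv q ** pdx FF q) p A B" "dd (\<lambda>q. Finv q ** pdy FF q) p C D"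
    "C - B + ((Finv p ** pdx FF p) ** (Finv p ** pdy FF p) - (Finv p ** pdy FF p) ** (Finv p ** pdx FF p)) = 0"
proof -
  define Ix where "Ix = etaR ** transpose (pdx FF p) ** etaR"
  define Iy where "Iy = etaR ** transpose (pdy FF p) ** etaR"
  define Fxy where "Fxy = (\<chi> i j. pdy (pdx (G j)) p $ i)"
  have dSx: "dd (\<lambda>q. Finv q ** pdx FF q) p (Finv p ** (\<chi> i j. pdx (pdx (G j)) p $ i) + Ix ** pdx FF p)
      (Finv p ** Fxy + Iy ** pdx FF p)"
    unfolding Ix_def Iy_def Fxy_def by (intro dd_mm dFinv[OF p] dFx[OF p])
  have dSy: "dd (\<lambda>q. Finv q ** pdy FF q) p (Finv p ** Fxy + Ix ** pdy FF p)
      (Finv p ** (\<chi> i j. pdy (pdy (G j)) p $ i) + Iy ** pdy FF p)"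
    unfolding Ix_def Iy_def Fxy_def schwarzFF[OF p] by (intro dd_mm dFinv[OF p] dFy[OF p])
  have ix: "Ix ** FF p = - (Finv p ** pdx FF p)" using inv_deriv(1)[OF p] unfolding Ix_def
    by (simp add: eq_neg_iff_add_eq_0 add.commute)
  have iy: "Iy ** FF p = - (Finv p ** pdy FF p)" using inv_deriv(2)[OF p] unfolding Iy_def
    by (simp add: eq_neg_iff_add_eq_0 add.commute)
  have e1: "Ix ** pdy FF p = - ((Finv p ** pdx FF p) ** (Finv p ** pdy FF p))"
  proof -
    have "Ix ** pdy FF p = Ix ** ((FF p ** Finv p) ** pdy FF p)" using Finv_right[OF p] by simp
    also have "\<dots> = (Ix ** FF p) ** (Finv p ** pdy FF p)" by (simp add: matrix_mul_assoc)
    finally show ?thesis using ix by (simp add: mm_minus_l)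
  qed
  have e2: "Iy ** pdx FF p = - ((Finv p ** pdy FF p) ** (Finv p ** pdx FF p))"
  proof -
    have "Iy ** pdx FF p = Iy ** ((FF p ** Finv p) ** pdx FF p)" using Finv_right[OF p] by simp
    also have "\<dots> = (Iy ** FF p) ** (Finv p ** pdx FF p)" by (simp add: matrix_mul_assoc)
    finally show ?thesis using iy by (simp add: mm_minus_l)
  qed
  show ?thesis
    by (rule that[OF dSx dSy]) (simp add: e1 e2)
qed

lemma Amat_shift: "Amat c \<xi> h u t q = Amat c \<xi> h u 0 q + AM 0 0 (complex_of_real (exp (u q) * ((t / (2 * c)) / sqrt 2)))
    (- complex_of_real (exp (u q) * ((t / (2 * c)) / sqrt 2))) (complex_of_real (exp (u q) * ((t / (2 * c)) / sqrt 2)))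
    (- complex_of_real (exp (u q) * ((t / (2 * c)) / sqrt 2)))"
  apply (subst Amat_AM)
  apply (subst AM_shift)
  apply (simp add: Amat_AM)
  done

lemma Amat0': assumes p: "p \<in> U"
  obtains E ux uy a1 a2 H where "Amat c \<xi> h u 0 p = AM E (Complex (ux / 2) (- uy / 2)) a1 (a1 - H) a2 (a2 - H)"
    "ux = pdx u p" "uy = pdy u p"
proof -
  have "Amat c \<xi> h u 0 p = AM (exp (u p)) (Complex (pdx u p / 2) (- pdy u p / 2))
     ((complex_of_real (inverse (exp (u p))) * (Complex (Re (\<xi> p)) (Im (\<xi> p)) + complex_of_real c) + complex_of_real (exp (u p)) * complex_of_real (h p)) / complex_of_real (sqrt 2))
     ((complex_of_real (inverse (exp (u p))) * (Complex (Re (\<xi> p)) (Im (\<xi> p)) + complex_of_real c) + complex_of_real (exp (u p)) * complex_of_real (h p)) / complex_of_real (sqrt 2)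
       - (2 * complex_of_real (exp (u p)) * complex_of_real (h p)) / complex_of_real (sqrt 2))
     ((complex_of_real (inverse (exp (u p))) * Complex (Re (\<xi> p)) (Im (\<xi> p)) + complex_of_real (exp (u p)) * complex_of_real (h p)) / complex_of_real (sqrt 2))
     ((complex_of_real (inverse (exp (u p))) * Complex (Re (\<xi> p)) (Im (\<xi> p)) + complex_of_real (exp (u p)) * complex_of_real (h p)) / complex_of_real (sqrt 2)
       - (2 * complex_of_real (exp (u p)) * complex_of_real (h p)) / complex_of_real (sqrt 2))"
    unfolding Amat0[OF p] by (simp add: diff_divide_distrib[symmetric] algebra_simps)
  then show ?thesis using that by blast
qed

lemma part1: "so41 (alpha (Amat c \<xi> h u t p) v)"
  unfolding Amat_AM by (rule so41_alpha[OF AM_skew])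

lemma part3: assumes p: "p \<in> U"
  shows "pdx (\<lambda>q. alpha (Amat c \<xi> h u t q) \<i>) p - pdy (\<lambda>q. alpha (Amat c \<xi> h u t q) 1) p
      + (alpha (Amat c \<xi> h u t p) 1 ** alpha (Amat c \<xi> h u t p) \<i>
         - alpha (Amat c \<xi> h u t p) \<i> ** alpha (Amat c \<xi> h u t p) 1) = 0"
proof -
  define C where "C = (t / (2 * c)) / sqrt 2"
  define k where "k q = exp (u q) * C" for q
  define M where "M = AM 0 0 1 (-1) 1 (-1)"
  define MR where "MR = alpha M 1"
  define MI where "MI = alpha M \<i>"
  define Sx where "Sx q = Finv q ** pdx FF q" for q
  define Sy where "Sy q = Finv q ** pdy FF q" for q
  define ux where "ux = pdx u p"
  define uy where "uy = pdy u p"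
  have shift: "alpha (Amat c \<xi> h u t q) v = alpha (Amat c \<xi> h u 0 q) v + k q *\<^sub>R alpha M v" for q v
    unfolding Amat_shift[of t] alpha_add k_def C_def M_def by (simp only: alpha_AM0)
  have onU: "alpha (Amat c \<xi> h u t q) 1 = Sx q + k q *\<^sub>R MR"
    "alpha (Amat c \<xi> h u t q) \<i> = Sy q + k q *\<^sub>R MI" if "q \<in> U" for q
    using shift[of q 1] shift[of q \<i>] Sx_eq[OF that] Sy_eq[OF that] unfolding Sx_def Sy_def MR_def MI_def by simp_all
  have dk: "dd k p (k p * ux) (k p * uy)"
    unfolding k_def ux_def uy_def
    by (rule dd_cong[OF dd_mult[OF dd_exp[OF du[OF p]] dd_const]]) simp_all
  obtain A B Cc D where dSx: "dd Sx p A B" and dSy: "dd Sy p Cc D"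
    and mc0: "Cc - B + (Sx p ** Sy p - Sy p ** Sx p) = 0"
    using MC0[OF p] unfolding Sx_def[symmetric] Sy_def[symmetric] by blast
  have dP: "dd (\<lambda>q. alpha (Amat c \<xi> h u t q) 1) p (A + (k p * ux) *\<^sub>R MR) (B + (k p * uy) *\<^sub>R MR)"
  proof -
    have "dd (\<lambda>q. Sx q + k q *\<^sub>R MR) p (A + (k p * ux) *\<^sub>R MR) (B + (k p * uy) *\<^sub>R MR)"
      using dd_add[OF dSx dd_scaleR[OF dk dd_const]] by simp
    then show ?thesis by (rule dd_transfer[OF _ U p]) (simp_all add: onU)
  qed
  have dQ: "dd (\<lambda>q. alpha (Amat c \<xi> h u t q) \<i>) p (Cc + (k p * ux) *\<^sub>R MI) (D + (k p * uy) *\<^sub>R MI)"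
  proof -
    have "dd (\<lambda>q. Sy q + k q *\<^sub>R MI) p (Cc + (k p * ux) *\<^sub>R MI) (D + (k p * uy) *\<^sub>R MI)"
      using dd_add[OF dSy dd_scaleR[OF dk dd_const]] by simp
    then show ?thesis by (rule dd_transfer[OF _ U p]) (simp_all add: onU)
  qed
  have mcid: "ux *\<^sub>R MI - uy *\<^sub>R MR + (Sx p ** MI - MI ** Sx p) + (MR ** Sy p - Sy p ** MR) = 0"
  proof -
    obtain E ux' uy' a1 a2 H where A0: "Amat c \<xi> h u 0 p = AM E (Complex (ux' / 2) (- uy' / 2)) a1 (a1 - H) a2 (a2 - H)"
      and u1: "ux' = pdx u p" and u2: "uy' = pdy u p" by (rule Amat0'[OF p])
    have e1: "Sx p = alpha (AM E (Complex (ux / 2) (- uy / 2)) a1 (a1 - H) a2 (a2 - H)) 1"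
      using Sx_eq[OF p] A0 u1 u2 unfolding Sx_def ux_def uy_def by (simp only:)
    have e2: "Sy p = alpha (AM E (Complex (ux / 2) (- uy / 2)) a1 (a1 - H) a2 (a2 - H)) \<i>"
      using Sy_eq[OF p] A0 u1 u2 unfolding Sy_def ux_def uy_def by (simp only:)
    show ?thesis unfolding e1 e2 MR_def MI_def M_def by (rule MC_ident)
  qed
  have rr: "MR ** MI = MI ** MR" unfolding MR_def MI_def M_def by (rule MR_MI)
  have "pdx (\<lambda>q. alpha (Amat c \<xi> h u t q) \<i>) p = Cc + (k p * ux) *\<^sub>R MI" using dd_pd[OF dQ] by simp
  moreover have "pdy (\<lambda>q. alpha (Amat c \<xi> h u t q) 1) p = B + (k p * uy) *\<^sub>R MR" using dd_pd[OF dP] by simp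
  moreover have "alpha (Amat c \<xi> h u t p) 1 = Sx p + k p *\<^sub>R MR" "alpha (Amat c \<xi> h u t p) \<i> = Sy p + k p *\<^sub>R MI"
    using onU[OF p] by simp_all
  ultimately have "pdx (\<lambda>q. alpha (Amat c \<xi> h u t q) \<i>) p - pdy (\<lambda>q. alpha (Amat c \<xi> h u t q) 1) p
      + (alpha (Amat c \<xi> h u t p) 1 ** alpha (Amat c \<xi> h u t p) \<i>
         - alpha (Amat c \<xi> h u t p) \<i> ** alpha (Amat c \<xi> h u t p) 1)
    = (Cc - B + (Sx p ** Sy p - Sy p ** Sx p)) + k p *\<^sub>R (ux *\<^sub>R MI - uy *\<^sub>R MR + (Sx p ** MI - MI ** Sx p) + (MR ** Sy p - Sy p ** MR))
      + (k p * k p) *\<^sub>R (MR ** MI - MI ** MR)"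
    by (simp add: matrix_add_ldistrib mm_add_r matrix_scalar_ac scalar_matrix_assoc[symmetric] mm_diff_l mm_diff_r
        algebra_simps)
  then show ?thesis using mc0 mcid rr by simp
qed

end

theorem mainTheorem16:
  fixes U :: "complex set"
    and f F1 F2 N1 N2 :: "complex \<Rightarrow> real^5"
    and u h :: "complex \<Rightarrow> real"
    and \<xi> :: "complex \<Rightarrow> complex"
    and c :: real
  assumes U: "open U" "connected U" "simply_connected U"
    and smooth: "Cinf_on U f" "Cinf_on U F1" "Cinf_on U F2" "Cinf_on U N1" "Cinf_on U N2"
       "Cinf_on U u" "Cinf_on U h"
    and frame: "\<And>p. p \<in> U \<Longrightarrow> SOp41 (frameF f F1 F2 N1 N2 p)"
    and fz: "\<And>p. p \<in> U \<Longrightarrow> DzV (cvf f) p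
        = complex_of_real (exp (u p) / sqrt 2) *s (cvf F1 p - \<i> *s cvf F2 p)"
    and conformal: "\<And>p. p \<in> U \<Longrightarrow>
        lor (DzV (cvf f) p) (DzbV (cvf f) p) = complex_of_real (exp (2 * u p))"
    and xi2: "\<And>p. p \<in> U \<Longrightarrow> \<xi> p = - lor (DzV (DzV (cvf f)) p) (cvf N2 p)"
    and xi1: "\<And>p. p \<in> U \<Longrightarrow> lor (DzV (DzV (cvf f)) p) (cvf N1 p) = \<xi> p + complex_of_real c"
    and c: "c \<noteq> 0"
    and mtrapped: "\<And>p. p \<in> U \<Longrightarrow> DzbV (DzV (cvf f)) p
        = - complex_of_real (exp (2 * u p)) *s cvf f p
          + complex_of_real (exp (2 * u p) * h p) *s (cvf N1 p + cvf N2 p)"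
    and nonisotropic: "\<And>p. p \<in> U \<Longrightarrow> (\<xi> p + complex_of_real c)\<^sup>2 - (\<xi> p)\<^sup>2 \<noteq> 0"
    and parallel: "\<And>p. p \<in> U \<Longrightarrow> lor (DzV (cvf N1) p) (cvf N2 p) = 0"
  shows "\<forall>t::real. \<forall>p\<in>U.
      (\<forall>v. so41 (alpha (Amat c \<xi> h u t p) v))
    \<and> (t = 0 \<longrightarrow> (\<forall>v. alpha (Amat c \<xi> h u 0 p) v
          = matrix_inv (frameF f F1 F2 N1 N2 p)
            ** frechet_derivative (frameF f F1 F2 N1 N2) (at p) v))
    \<and> pdx (\<lambda>q. alpha (Amat c \<xi> h u t q) \<i>) p - pdy (\<lambda>q. alpha (Amat c \<xi> h u t q) 1) p
      + (alpha (Amat c \<xi> h u t p) 1 ** alpha (Amat c \<xi> h u t p) \<i>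
         - alpha (Amat c \<xi> h u t p) \<i> ** alpha (Amat c \<xi> h u t p) 1) = 0"
proof -
  have "MT U f F1 F2 N1 N2 u h \<xi> c"
    unfolding MT_def using U(1) smooth frame fz xi2 xi1 mtrapped parallel by blast
  then interpret MT U f F1 F2 N1 N2 u h \<xi> c .
  show ?thesis
    using part1 part2 part3 by blast
qed

end
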